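(* Let $F$ be an indexed group with degree map $\deg: F\to\mathbb{Z}$, let $G$ be a group, let $H$ be a subgroup of $G$, and let $\Phi$ be a set of homomorphisms $F\to G$ with the following two properties. (I) $\Phi$ is invariant under conjugation by elements of $H$: if $h\in H$ and $\varphi\in\Phi$, then the homomorphism $\psi: f\mapsto h^{-1}\varphi(f)h$ lies in $\Phi$. (II) For any $\varphi\in\Phi$ and any $h$ in the $\varphi$-core $H_\varphi$ of $H$, the homomorphism $\psi: F\to G$ defined by $\psi(f)=\varphi(f)$ for all $f\in F$ with $\deg f=0$ and $\psi(f_1)=\varphi(f_1)h$ for some element $f_1\in F$ of degree one (equivalently, for all degree-one elements) belongs to $\Phi$. Then $|\Phi|$ is divisible by $|H|$.
   Context: An indexed group is a group $F$ equipped with a surjective homomorphism $\deg: F\to\mathbb{Z}$ (the degree). For $x,y$ in a group, $x^y=y^{-1}xy$, and for a subgroup $H$, $H^y=y^{-1}Hy$; $C(X)$ denotes the centraliser of a subset $X$. For a homomorphism $\varphi: F\to G$ from an indexed group and a subgroup $H\le G$, the $\varphi$-core of $H$ is $H_\varphi=\bigcap_{f\in F}H^{\varphi(f)}\cap C(\{\varphi(f)\mid \deg f=0\})$, i.e. the set of $h$ with $\varphi(f)h\varphi(f)^{-1}\in H$ for all $f\in F$... more precisely $h\in H^{\varphi(f)}$ for all $f$ and $h$ commuting with $\varphi(f)$ whenever $\deg f=0$. (For $h\in H_\varphi$ the map $\psi$ in (II) is a well-defined homomorphism.) Groups need not be finite; divisibility is understood in the sense of cardinal arithmetic: an infinite cardinal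 is divisible by every nonzero cardinal not exceeding it. *)

theory Defs
  imports "HOL-Algebra.Group" "HOL-Library.Equipollence"
begin

text \<open>Cardinal divisibility: |A| divides |B| iff |B| = |A| * |C| for some cardinal,
  i.e. B is equipotent to A \<times> C for some set C (wlog |C| \<le> |B|, so C may be
  taken of the element type of B).\<close>
definition card_dvd :: "'a set \<Rightarrow> 'b set \<Rightarrow> bool" where
  "card_dvd A B \<longleftrightarrow> (\<exists>C :: 'b set. B \<approx> A \<times> C)"

definition homs :: "('f,'m) monoid_scheme \<Rightarrow> ('g,'n) monoid_scheme \<Rightarrow> ('f \<Rightarrow> 'g) set" where
  "homs F G = hom F G \<inter> extensional (carrier F)"

definition indexed_group :: "('f,'m) monoid_scheme \<Rightarrow> ('f \<Rightarrow> int) \<Rightarrow> bool" where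
  "indexed_group F deg \<longleftrightarrow> group F \<and>
     (\<forall>x\<in>carrier F. \<forall>y\<in>carrier F. deg (x \<otimes>\<^bsub>F\<^esub> y) = deg x + deg y) \<and>
     deg ` carrier F = UNIV"

definition conj_set :: "('g,'n) monoid_scheme \<Rightarrow> 'g set \<Rightarrow> 'g \<Rightarrow> 'g set" where
  "conj_set G H y = (\<lambda>x. inv\<^bsub>G\<^esub> y \<otimes>\<^bsub>G\<^esub> x \<otimes>\<^bsub>G\<^esub> y) ` H"

definition phi_core :: "('f,'m) monoid_scheme \<Rightarrow> ('f \<Rightarrow> int) \<Rightarrow> ('g,'n) monoid_scheme
    \<Rightarrow> ('f \<Rightarrow> 'g) \<Rightarrow> 'g set \<Rightarrow> 'g set" where
  "phi_core F deg G \<phi> H =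
     {h \<in> carrier G. (\<forall>f\<in>carrier F. h \<in> conj_set G H (\<phi> f)) \<and>
        (\<forall>f\<in>carrier F. deg f = 0 \<longrightarrow> h \<otimes>\<^bsub>G\<^esub> \<phi> f = \<phi> f \<otimes>\<^bsub>G\<^esub> h)}"

end

theory Submission
  imports Defs "HOL-Algebra.Coset"
begin

context group begin
lemma cancel_l [simp]: "x \<in> carrier G \<Longrightarrow> y \<in> carrier G \<Longrightarrow> x \<otimes> (inv x \<otimes> y) = y"
  by (simp add: m_assoc[symmetric])
lemma cancel_l' [simp]: "x \<in> carrier G \<Longrightarrow> y \<in> carrier G \<Longrightarrow> inv x \<otimes> (x \<otimes> y) = y"
  by (simp add: m_assoc[symmetric])
lemma conj_solve: "a \<in> carrier G \<Longrightarrow> y \<in> carrier G \<Longrightarrow> a \<otimes> y \<otimes> inv a = z \<Longrightarrow> y = inv a \<otimes> z \<otimes> a"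
  by (erule subst) (simp add: m_assoc)
lemma conj_comm: "a \<in> carrier G \<Longrightarrow> y \<in> carrier G \<Longrightarrow> z \<in> carrier G \<Longrightarrow> a \<otimes> y \<otimes> inv a = z \<Longrightarrow> a \<otimes> y = z \<otimes> a"
  by (auto simp add: m_assoc)
lemma comm_inv:
  assumes a: "a \<in> carrier G" and b: "b \<in> carrier G" and eq: "a \<otimes> b = b \<otimes> a"
  shows "inv a \<otimes> b = b \<otimes> inv a"
proof -
  have "inv a \<otimes> b = inv a \<otimes> (b \<otimes> a) \<otimes> inv a" using a b by (simp add: m_assoc)
  also have "\<dots> = inv a \<otimes> (a \<otimes> b) \<otimes> inv a" using eq by simp
  also have "\<dots> = b \<otimes> inv a" using a b by (simp add: m_assoc)
  finally show ?thesis .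
qed

lemma comm_mult:
  assumes a: "a \<in> carrier G" and b: "b \<in> carrier G" and x: "x \<in> carrier G"
    and e1: "a \<otimes> x = x \<otimes> a" and e2: "b \<otimes> x = x \<otimes> b"
  shows "a \<otimes> b \<otimes> x = x \<otimes> (a \<otimes> b)"
proof -
  have "a \<otimes> b \<otimes> x = a \<otimes> (x \<otimes> b)" using a b x e2 by (simp add: m_assoc)
  also have "\<dots> = (a \<otimes> x) \<otimes> b" using a b x by (simp add: m_assoc)
  also have "\<dots> = x \<otimes> (a \<otimes> b)" using a b x e1 by (simp add: m_assoc)
  finally show ?thesis .
qed

lemma pow_core_nat:
  assumes S: "subgroup S G" and g: "g \<in> carrier G"
    and nrm: "\<And>s. s \<in> S \<Longrightarrow> g \<otimes> s \<otimes> inv g \<in> S"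
    and nrm': "\<And>s. s \<in> S \<Longrightarrow> inv g \<otimes> s \<otimes> g \<in> S"
    and c: "c \<in> S"
  shows "inv (g [^] (n::nat)) \<otimes> (g \<otimes> c) [^] n \<in> S \<and> (g \<otimes> c) [^] n \<otimes> inv (g [^] n) \<in> S"
proof (induction n)
  case 0
  show ?case using subgroup.one_closed[OF S] by simp
next
  case (Suc n)
  have cc: "c \<in> carrier G" using subgroup.mem_carrier[OF S c] .
  let ?x = "inv (g [^] n) \<otimes> (g \<otimes> c) [^] n"
  let ?y = "(g \<otimes> c) [^] n \<otimes> inv (g [^] n)"
  have xS: "?x \<in> S" and yS: "?y \<in> S" using Suc by auto
  have xc: "?x \<in> carrier G" using subgroup.mem_carrier[OF S xS] .
  have "inv (g [^] Suc n) \<otimes> (g \<otimes> c) [^] Suc n = inv g \<otimes> ?x \<otimes> g \<otimes> c"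
    using g cc by (simp add: m_assoc inv_mult_group)
  moreover have "inv g \<otimes> ?x \<otimes> g \<otimes> c \<in> S"
    by (rule subgroup.m_closed[OF S nrm'[OF xS] c])
  moreover have "(g \<otimes> c) [^] Suc n \<otimes> inv (g [^] Suc n) = g \<otimes> (c \<otimes> ?y) \<otimes> inv g"
  proof -
    have e1: "(g \<otimes> c) [^] Suc n = (g \<otimes> c) \<otimes> (g \<otimes> c) [^] n" by (rule nat_pow_Suc2) (simp add: g cc)
    have e2: "g [^] Suc n = g \<otimes> g [^] n" by (rule nat_pow_Suc2) (simp add: g)
    show ?thesis unfolding e1 e2 using g cc by (simp add: m_assoc inv_mult_group)
  qed
  moreover have "g \<otimes> (c \<otimes> ?y) \<otimes> inv g \<in> S"
    by (rule nrm[OF subgroup.m_closed[OF S c yS]])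
  ultimately show ?case by simp
qed

lemma pow_core_int:
  assumes S: "subgroup S G" and g: "g \<in> carrier G"
    and nrm: "\<And>s. s \<in> S \<Longrightarrow> g \<otimes> s \<otimes> inv g \<in> S"
    and nrm': "\<And>s. s \<in> S \<Longrightarrow> inv g \<otimes> s \<otimes> g \<in> S"
    and c: "c \<in> S"
  shows "inv (g [^] (i::int)) \<otimes> (g \<otimes> c) [^] i \<in> S"
proof (cases i rule: int_cases)
  case (nonneg n)
  then show ?thesis using pow_core_nat[OF assms, of n] by (simp add: int_pow_int)
next
  case (neg m)
  define n where "n = Suc m"
  have i: "i = - int n" using neg n_def by simp
  have cc: "c \<in> carrier G" using subgroup.mem_carrier[OF S c] .
  have "inv (g [^] i) \<otimes> (g \<otimes> c) [^] i = inv ((g \<otimes> c) [^] n \<otimes> inv (g [^] n))"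
    using i g cc by (simp add: int_pow_neg_int inv_mult_group)
  then show ?thesis using pow_core_nat[OF assms, of n] S by (simp add: subgroup.m_inv_closed)
qed

end

locale ctx = F?: group F + G?: group G
  for F :: "('f,'m) monoid_scheme" and G :: "('g,'n) monoid_scheme" +
  fixes deg :: "'f \<Rightarrow> int" and H :: "'g set" and t :: 'f
  assumes degm: "\<And>x y. x \<in> carrier F \<Longrightarrow> y \<in> carrier F \<Longrightarrow> deg (x \<otimes>\<^bsub>F\<^esub> y) = deg x + deg y"
    and HG: "subgroup H G"
    and t: "t \<in> carrier F" "deg t = 1"
begin

lemma deg_one: "deg \<one>\<^bsub>F\<^esub> = 0"
  using degm[of "\<one>\<^bsub>F\<^esub>" "\<one>\<^bsub>F\<^esub>"] by simp

lemma deg_inv: "x \<in> carrier F \<Longrightarrow> deg (inv\<^bsub>F\<^esub> x) = - deg x"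
  using degm[of x "inv\<^bsub>F\<^esub> x"] deg_one by simp

lemma deg_nat_pow: "x \<in> carrier F \<Longrightarrow> deg (x [^]\<^bsub>F\<^esub> (n::nat)) = int n * deg x"
  by (induction n) (auto simp: deg_one degm algebra_simps)

lemma deg_int_pow: "x \<in> carrier F \<Longrightarrow> deg (x [^]\<^bsub>F\<^esub> (i::int)) = i * deg x"
proof (cases "i < 0")
  case True
  assume x: "x \<in> carrier F"
  have "x [^]\<^bsub>F\<^esub> i = inv\<^bsub>F\<^esub> (x [^]\<^bsub>F\<^esub> nat (-i))"
    using True unfolding int_pow_def2 by simp
  moreover have "x [^]\<^bsub>F\<^esub> nat (-i) \<in> carrier F" using x by simp
  ultimately have "deg (x [^]\<^bsub>F\<^esub> i) = - (int (nat (-i)) * deg x)"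
    using x by (simp only: deg_inv deg_nat_pow)
  then show ?thesis using True by simp
next
  case False
  assume x: "x \<in> carrier F"
  have "x [^]\<^bsub>F\<^esub> i = x [^]\<^bsub>F\<^esub> nat i"
    using False unfolding int_pow_def2 by simp
  then have "deg (x [^]\<^bsub>F\<^esub> i) = int (nat i) * deg x"
    using x by (simp only: deg_nat_pow)
  then show ?thesis using False by simp
qed

definition K where "K = {k \<in> carrier F. deg k = 0}"

definition kpart where "kpart f = f \<otimes>\<^bsub>F\<^esub> inv\<^bsub>F\<^esub> (t [^]\<^bsub>F\<^esub> deg f)"

lemma kpart: "f \<in> carrier F \<Longrightarrow> kpart f \<in> K"
  by (auto simp: kpart_def K_def degm deg_inv deg_int_pow t)

lemma kpart_carrier: "f \<in> carrier F \<Longrightarrow> kpart f \<in> carrier F"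
  using kpart by (auto simp: K_def)

lemma kpart_decomp: "f \<in> carrier F \<Longrightarrow> f = kpart f \<otimes>\<^bsub>F\<^esub> t [^]\<^bsub>F\<^esub> deg f"
  by (simp add: kpart_def t F.m_assoc)

lemma homs_gh: "\<phi> \<in> homs F G \<Longrightarrow> group_hom F G \<phi>"
  unfolding homs_def group_hom_def group_hom_axioms_def
  by (simp add: F.group_axioms G.group_axioms)

lemma homs_unique:
  assumes "\<psi>1 \<in> homs F G" "\<psi>2 \<in> homs F G" "\<And>k. k \<in> K \<Longrightarrow> \<psi>1 k = \<psi>2 k" "\<psi>1 t = \<psi>2 t"
  shows "\<psi>1 = \<psi>2"
proof
  fix f show "\<psi>1 f = \<psi>2 f"
  proof (cases "f \<in> carrier F")
    case True
    interpret A: group_hom F G \<psi>1 by (rule homs_gh[OF assms(1)])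
    interpret B: group_hom F G \<psi>2 by (rule homs_gh[OF assms(2)])
    have kc: "kpart f \<in> carrier F" "t [^]\<^bsub>F\<^esub> deg f \<in> carrier F" using True t kpart_carrier by auto
    have "\<psi>1 f = \<psi>1 (kpart f) \<otimes>\<^bsub>G\<^esub> \<psi>1 (t [^]\<^bsub>F\<^esub> deg f)"
      using kpart_decomp[OF True] A.hom_mult[OF kc] by metis
    also have "\<dots> = \<psi>2 (kpart f) \<otimes>\<^bsub>G\<^esub> \<psi>2 (t [^]\<^bsub>F\<^esub> deg f)"
      using assms(3)[OF kpart[OF True]] assms(4) A.hom_int_pow[OF t(1)] B.hom_int_pow[OF t(1)] by metis
    also have "\<dots> = \<psi>2 f"
      using kpart_decomp[OF True] B.hom_mult[OF kc] by metis
    finally show ?thesis .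
  next
    case False
    then show ?thesis using assms(1,2) by (auto simp: homs_def extensional_def)
  qed
qed


lemma K_carrier: "x \<in> K \<Longrightarrow> x \<in> carrier F" by (simp add: K_def)

lemma K_conj: "y \<in> carrier F \<Longrightarrow> x \<in> K \<Longrightarrow> y \<otimes>\<^bsub>F\<^esub> x \<otimes>\<^bsub>F\<^esub> inv\<^bsub>F\<^esub> y \<in> K"
  by (simp add: K_def degm deg_inv)

lemma K_conj': "y \<in> carrier F \<Longrightarrow> x \<in> K \<Longrightarrow> inv\<^bsub>F\<^esub> y \<otimes>\<^bsub>F\<^esub> x \<otimes>\<^bsub>F\<^esub> y \<in> K"
  using K_conj[of "inv\<^bsub>F\<^esub> y" x] by simp

lemma conj_pow_nat:
  assumes phi: "\<phi> \<in> homs F G" and a: "a \<in> carrier G"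
    and hyp: "\<And>x. x \<in> K \<Longrightarrow> a \<otimes>\<^bsub>G\<^esub> \<phi> x \<otimes>\<^bsub>G\<^esub> inv\<^bsub>G\<^esub> a = \<phi> (t \<otimes>\<^bsub>F\<^esub> x \<otimes>\<^bsub>F\<^esub> inv\<^bsub>F\<^esub> t)"
  shows "x \<in> K \<Longrightarrow> a [^]\<^bsub>G\<^esub> (n::nat) \<otimes>\<^bsub>G\<^esub> \<phi> x \<otimes>\<^bsub>G\<^esub> inv\<^bsub>G\<^esub> (a [^]\<^bsub>G\<^esub> n)
     = \<phi> (t [^]\<^bsub>F\<^esub> n \<otimes>\<^bsub>F\<^esub> x \<otimes>\<^bsub>F\<^esub> inv\<^bsub>F\<^esub> (t [^]\<^bsub>F\<^esub> n))"
proof (induction n arbitrary: x)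
  case 0
  interpret A: group_hom F G \<phi> by (rule homs_gh[OF phi])
  show ?case using K_carrier[OF 0] by simp
next
  case (Suc n)
  interpret A: group_hom F G \<phi> by (rule homs_gh[OF phi])
  have x: "x \<in> carrier F" using K_carrier[OF Suc.prems] .
  have tx: "t \<otimes>\<^bsub>F\<^esub> x \<otimes>\<^bsub>F\<^esub> inv\<^bsub>F\<^esub> t \<in> K" using K_conj[OF t(1) Suc.prems] .
  have px: "\<phi> x \<in> carrier G" using x by simp
  have "a [^]\<^bsub>G\<^esub> Suc n \<otimes>\<^bsub>G\<^esub> \<phi> x \<otimes>\<^bsub>G\<^esub> inv\<^bsub>G\<^esub> (a [^]\<^bsub>G\<^esub> Suc n)
      = a [^]\<^bsub>G\<^esub> n \<otimes>\<^bsub>G\<^esub> (a \<otimes>\<^bsub>G\<^esub> \<phi> x \<otimes>\<^bsub>G\<^esub> inv\<^bsub>G\<^esub> a) \<otimes>\<^bsub>G\<^esub> inv\<^bsub>G\<^esub> (a [^]\<^bsub>G\<^esub> n)"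
    using a px by (simp add: G.m_assoc G.inv_mult_group)
  also have "\<dots> = a [^]\<^bsub>G\<^esub> n \<otimes>\<^bsub>G\<^esub> \<phi> (t \<otimes>\<^bsub>F\<^esub> x \<otimes>\<^bsub>F\<^esub> inv\<^bsub>F\<^esub> t) \<otimes>\<^bsub>G\<^esub> inv\<^bsub>G\<^esub> (a [^]\<^bsub>G\<^esub> n)"
    using hyp[OF Suc.prems] by simp
  also have "\<dots> = \<phi> (t [^]\<^bsub>F\<^esub> n \<otimes>\<^bsub>F\<^esub> (t \<otimes>\<^bsub>F\<^esub> x \<otimes>\<^bsub>F\<^esub> inv\<^bsub>F\<^esub> t) \<otimes>\<^bsub>F\<^esub> inv\<^bsub>F\<^esub> (t [^]\<^bsub>F\<^esub> n))"
    using Suc.IH[OF tx] .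
  also have "t [^]\<^bsub>F\<^esub> n \<otimes>\<^bsub>F\<^esub> (t \<otimes>\<^bsub>F\<^esub> x \<otimes>\<^bsub>F\<^esub> inv\<^bsub>F\<^esub> t) \<otimes>\<^bsub>F\<^esub> inv\<^bsub>F\<^esub> (t [^]\<^bsub>F\<^esub> n)
      = t [^]\<^bsub>F\<^esub> Suc n \<otimes>\<^bsub>F\<^esub> x \<otimes>\<^bsub>F\<^esub> inv\<^bsub>F\<^esub> (t [^]\<^bsub>F\<^esub> Suc n)"
    using t(1) x by (simp add: F.m_assoc F.inv_mult_group)
  finally show ?case .
qed


lemma conj_pow_int:
  assumes phi: "\<phi> \<in> homs F G" and a: "a \<in> carrier G"
    and hyp: "\<And>x. x \<in> K \<Longrightarrow> a \<otimes>\<^bsub>G\<^esub> \<phi> x \<otimes>\<^bsub>G\<^esub> inv\<^bsub>G\<^esub> a = \<phi> (t \<otimes>\<^bsub>F\<^esub> x \<otimes>\<^bsub>F\<^esub> inv\<^bsub>F\<^esub> t)"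
    and x: "x \<in> K"
  shows "a [^]\<^bsub>G\<^esub> (i::int) \<otimes>\<^bsub>G\<^esub> \<phi> x \<otimes>\<^bsub>G\<^esub> inv\<^bsub>G\<^esub> (a [^]\<^bsub>G\<^esub> i)
     = \<phi> (t [^]\<^bsub>F\<^esub> i \<otimes>\<^bsub>F\<^esub> x \<otimes>\<^bsub>F\<^esub> inv\<^bsub>F\<^esub> (t [^]\<^bsub>F\<^esub> i))"
proof (cases i rule: int_cases)
  case (nonneg n)
  then show ?thesis using conj_pow_nat[OF phi a hyp x, of n] by (simp add: int_pow_int)
next
  case (neg m)
  define n where "n = Suc m"
  have i: "i = - int n" using neg n_def by simp
  interpret A: group_hom F G \<phi> by (rule homs_gh[OF phi])
  have xc: "x \<in> carrier F" using K_carrier[OF x] .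
  define x' where "x' = inv\<^bsub>F\<^esub> (t [^]\<^bsub>F\<^esub> n) \<otimes>\<^bsub>F\<^esub> x \<otimes>\<^bsub>F\<^esub> t [^]\<^bsub>F\<^esub> n"
  have x': "x' \<in> K" unfolding x'_def by (rule K_conj'[OF _ x]) (simp add: t)
  have x'c: "x' \<in> carrier F" using K_carrier[OF x'] .
  have "t [^]\<^bsub>F\<^esub> n \<otimes>\<^bsub>F\<^esub> x' \<otimes>\<^bsub>F\<^esub> inv\<^bsub>F\<^esub> (t [^]\<^bsub>F\<^esub> n) = x"
    unfolding x'_def using xc t by (simp add: F.m_assoc)
  then have "a [^]\<^bsub>G\<^esub> n \<otimes>\<^bsub>G\<^esub> \<phi> x' \<otimes>\<^bsub>G\<^esub> inv\<^bsub>G\<^esub> (a [^]\<^bsub>G\<^esub> n) = \<phi> x"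
    using conj_pow_nat[OF phi a hyp x', of n] by simp
  then have "\<phi> x' = inv\<^bsub>G\<^esub> (a [^]\<^bsub>G\<^esub> n) \<otimes>\<^bsub>G\<^esub> \<phi> x \<otimes>\<^bsub>G\<^esub> a [^]\<^bsub>G\<^esub> n"
    using G.conj_solve[of "a [^]\<^bsub>G\<^esub> n" "\<phi> x'" "\<phi> x"] a x'c by simp
  then show ?thesis using i a t by (simp add: G.int_pow_neg_int F.int_pow_neg_int x'_def)
qed

definition ext where
  "ext \<phi> a = (\<lambda>f\<in>carrier F. \<phi> (kpart f) \<otimes>\<^bsub>G\<^esub> a [^]\<^bsub>G\<^esub> deg f)"

lemma ext_homs:
  assumes phi: "\<phi> \<in> homs F G" and a: "a \<in> carrier G"
    and hyp: "\<And>x. x \<in> K \<Longrightarrow> a \<otimes>\<^bsub>G\<^esub> \<phi> x \<otimes>\<^bsub>G\<^esub> inv\<^bsub>G\<^esub> a = \<phi> (t \<otimes>\<^bsub>F\<^esub> x \<otimes>\<^bsub>F\<^esub> inv\<^bsub>F\<^esub> t)"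
  shows "ext \<phi> a \<in> homs F G"
proof -
  interpret A: group_hom F G \<phi> by (rule homs_gh[OF phi])
  have cl: "ext \<phi> a \<in> carrier F \<rightarrow> carrier G"
    using a kpart_carrier by (auto simp: ext_def)
  have mult: "ext \<phi> a (f \<otimes>\<^bsub>F\<^esub> g) = ext \<phi> a f \<otimes>\<^bsub>G\<^esub> ext \<phi> a g"
    if f: "f \<in> carrier F" and g: "g \<in> carrier F" for f g
  proof -
    define m where "m = deg f"
    define n where "n = deg g"
    have kf: "kpart f \<in> carrier F" "kpart g \<in> carrier F" using kpart_carrier f g by auto
    have tm: "t [^]\<^bsub>F\<^esub> m \<in> carrier F" "t [^]\<^bsub>F\<^esub> n \<in> carrier F" using t by auto
    have am: "a [^]\<^bsub>G\<^esub> m \<in> carrier G" "a [^]\<^bsub>G\<^esub> n \<in> carrier G" using a by auto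
    have c: "a [^]\<^bsub>G\<^esub> m \<otimes>\<^bsub>G\<^esub> \<phi> (kpart g) \<otimes>\<^bsub>G\<^esub> inv\<^bsub>G\<^esub> (a [^]\<^bsub>G\<^esub> m)
       = \<phi> (t [^]\<^bsub>F\<^esub> m \<otimes>\<^bsub>F\<^esub> kpart g \<otimes>\<^bsub>F\<^esub> inv\<^bsub>F\<^esub> (t [^]\<^bsub>F\<^esub> m))"
      using conj_pow_int[OF phi a hyp kpart[OF g]] .
    have c2: "a [^]\<^bsub>G\<^esub> m \<otimes>\<^bsub>G\<^esub> \<phi> (kpart g)
       = \<phi> (t [^]\<^bsub>F\<^esub> m \<otimes>\<^bsub>F\<^esub> kpart g \<otimes>\<^bsub>F\<^esub> inv\<^bsub>F\<^esub> (t [^]\<^bsub>F\<^esub> m)) \<otimes>\<^bsub>G\<^esub> a [^]\<^bsub>G\<^esub> m"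
      using G.conj_comm[OF am(1) _ _ c] kf tm by simp
    have e: "kpart f \<otimes>\<^bsub>F\<^esub> (t [^]\<^bsub>F\<^esub> m \<otimes>\<^bsub>F\<^esub> kpart g \<otimes>\<^bsub>F\<^esub> inv\<^bsub>F\<^esub> (t [^]\<^bsub>F\<^esub> m))
        = kpart (f \<otimes>\<^bsub>F\<^esub> g)"
      using f g t tm unfolding kpart_def m_def n_def
      by (simp add: degm F.m_assoc F.int_pow_mult F.inv_mult_group)
    have "ext \<phi> a f \<otimes>\<^bsub>G\<^esub> ext \<phi> a g
        = \<phi> (kpart f) \<otimes>\<^bsub>G\<^esub> (a [^]\<^bsub>G\<^esub> m \<otimes>\<^bsub>G\<^esub> \<phi> (kpart g)) \<otimes>\<^bsub>G\<^esub> a [^]\<^bsub>G\<^esub> n"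
      using f g kf am by (simp add: ext_def m_def n_def G.m_assoc)
    also have "\<dots> = \<phi> (kpart f) \<otimes>\<^bsub>G\<^esub> \<phi> (t [^]\<^bsub>F\<^esub> m \<otimes>\<^bsub>F\<^esub> kpart g \<otimes>\<^bsub>F\<^esub> inv\<^bsub>F\<^esub> (t [^]\<^bsub>F\<^esub> m)) \<otimes>\<^bsub>G\<^esub> (a [^]\<^bsub>G\<^esub> m \<otimes>\<^bsub>G\<^esub> a [^]\<^bsub>G\<^esub> n)"
      unfolding c2 using kf tm am by (simp add: G.m_assoc)
    also have "\<dots> = \<phi> (kpart (f \<otimes>\<^bsub>F\<^esub> g)) \<otimes>\<^bsub>G\<^esub> a [^]\<^bsub>G\<^esub> (m + n)"
      using kf tm a by (simp add: e[symmetric] G.int_pow_mult)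
    also have "\<dots> = ext \<phi> a (f \<otimes>\<^bsub>F\<^esub> g)"
      using f g by (simp add: ext_def m_def n_def degm)
    finally show ?thesis by simp
  qed
  show ?thesis using cl mult unfolding homs_def hom_def ext_def by auto
qed

lemma ext_K: "\<phi> \<in> homs F G \<Longrightarrow> a \<in> carrier G \<Longrightarrow> k \<in> K \<Longrightarrow> ext \<phi> a k = \<phi> k"
proof -
  assume phi: "\<phi> \<in> homs F G" and a: "a \<in> carrier G" and k: "k \<in> K"
  interpret A: group_hom F G \<phi> by (rule homs_gh[OF phi])
  have "kpart k = k" using k by (simp add: K_def kpart_def)
  then show ?thesis using k by (simp add: K_def ext_def)
qed

lemma ext_t: "\<phi> \<in> homs F G \<Longrightarrow> a \<in> carrier G \<Longrightarrow> ext \<phi> a t = a"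
proof -
  assume phi: "\<phi> \<in> homs F G" and a: "a \<in> carrier G"
  interpret A: group_hom F G \<phi> by (rule homs_gh[OF phi])
  have "kpart t = \<one>\<^bsub>F\<^esub>" using t by (simp add: kpart_def)
  then show ?thesis using t a by (simp add: ext_def)
qed


definition Cz where "Cz \<phi> c \<longleftrightarrow> c \<in> carrier G \<and> (\<forall>k\<in>K. c \<otimes>\<^bsub>G\<^esub> \<phi> k = \<phi> k \<otimes>\<^bsub>G\<^esub> c)"

definition M where "M \<phi> c = ext \<phi> (\<phi> t \<otimes>\<^bsub>G\<^esub> c)"

lemma M_props:
  assumes phi: "\<phi> \<in> homs F G" and c: "Cz \<phi> c"
  shows "M \<phi> c \<in> homs F G" "\<And>k. k \<in> K \<Longrightarrow> M \<phi> c k = \<phi> k" "M \<phi> c t = \<phi> t \<otimes>\<^bsub>G\<^esub> c"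
proof -
  interpret A: group_hom F G \<phi> by (rule homs_gh[OF phi])
  have cc: "c \<in> carrier G" using c by (simp add: Cz_def)
  have a: "\<phi> t \<otimes>\<^bsub>G\<^esub> c \<in> carrier G" using cc t by simp
  have hyp: "(\<phi> t \<otimes>\<^bsub>G\<^esub> c) \<otimes>\<^bsub>G\<^esub> \<phi> x \<otimes>\<^bsub>G\<^esub> inv\<^bsub>G\<^esub> (\<phi> t \<otimes>\<^bsub>G\<^esub> c) = \<phi> (t \<otimes>\<^bsub>F\<^esub> x \<otimes>\<^bsub>F\<^esub> inv\<^bsub>F\<^esub> t)"
    if x: "x \<in> K" for x
  proof -
    have xc: "x \<in> carrier F" using K_carrier[OF x] .
    have cm: "c \<otimes>\<^bsub>G\<^esub> \<phi> x = \<phi> x \<otimes>\<^bsub>G\<^esub> c" using c x by (simp add: Cz_def)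
    have "(\<phi> t \<otimes>\<^bsub>G\<^esub> c) \<otimes>\<^bsub>G\<^esub> \<phi> x \<otimes>\<^bsub>G\<^esub> inv\<^bsub>G\<^esub> (\<phi> t \<otimes>\<^bsub>G\<^esub> c)
       = \<phi> t \<otimes>\<^bsub>G\<^esub> (c \<otimes>\<^bsub>G\<^esub> \<phi> x) \<otimes>\<^bsub>G\<^esub> inv\<^bsub>G\<^esub> c \<otimes>\<^bsub>G\<^esub> inv\<^bsub>G\<^esub> (\<phi> t)"
      using cc t xc by (simp add: G.m_assoc G.inv_mult_group)
    also have "\<dots> = \<phi> t \<otimes>\<^bsub>G\<^esub> \<phi> x \<otimes>\<^bsub>G\<^esub> inv\<^bsub>G\<^esub> (\<phi> t)"
      unfolding cm using cc t xc by (simp add: G.m_assoc)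
    also have "\<dots> = \<phi> (t \<otimes>\<^bsub>F\<^esub> x \<otimes>\<^bsub>F\<^esub> inv\<^bsub>F\<^esub> t)"
      using t xc by simp
    finally show ?thesis .
  qed
  show "M \<phi> c \<in> homs F G" unfolding M_def by (rule ext_homs[OF phi a hyp])
  show "\<And>k. k \<in> K \<Longrightarrow> M \<phi> c k = \<phi> k" unfolding M_def using ext_K[OF phi a] .
  show "M \<phi> c t = \<phi> t \<otimes>\<^bsub>G\<^esub> c" unfolding M_def using ext_t[OF phi a] .
qed

lemma M_char:
  assumes phi: "\<phi> \<in> homs F G" and c: "Cz \<phi> c" and psi: "\<psi> \<in> homs F G"
    and "\<And>k. k \<in> K \<Longrightarrow> \<psi> k = \<phi> k" and "\<psi> t = \<phi> t \<otimes>\<^bsub>G\<^esub> c"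
  shows "\<psi> = M \<phi> c"
  by (rule homs_unique[OF psi M_props(1)[OF phi c]]) (simp_all add: assms M_props[OF phi c])

definition core where "core \<phi> = phi_core F deg G \<phi> H"

lemma conj_set_iff:
  assumes y: "y \<in> carrier G" and h: "h \<in> carrier G"
  shows "h \<in> conj_set G H y \<longleftrightarrow> y \<otimes>\<^bsub>G\<^esub> h \<otimes>\<^bsub>G\<^esub> inv\<^bsub>G\<^esub> y \<in> H"
proof
  assume "h \<in> conj_set G H y"
  then obtain x where x: "x \<in> H" "h = inv\<^bsub>G\<^esub> y \<otimes>\<^bsub>G\<^esub> x \<otimes>\<^bsub>G\<^esub> y" by (auto simp: conj_set_def)
  have "x \<in> carrier G" using subgroup.mem_carrier[OF HG x(1)] .
  then show "y \<otimes>\<^bsub>G\<^esub> h \<otimes>\<^bsub>G\<^esub> inv\<^bsub>G\<^esub> y \<in> H" using x y by (simp add: G.m_assoc)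
next
  assume a: "y \<otimes>\<^bsub>G\<^esub> h \<otimes>\<^bsub>G\<^esub> inv\<^bsub>G\<^esub> y \<in> H"
  have "h = inv\<^bsub>G\<^esub> y \<otimes>\<^bsub>G\<^esub> (y \<otimes>\<^bsub>G\<^esub> h \<otimes>\<^bsub>G\<^esub> inv\<^bsub>G\<^esub> y) \<otimes>\<^bsub>G\<^esub> y"
    using y h by (simp add: G.m_assoc)
  then show "h \<in> conj_set G H y" using a unfolding conj_set_def by blast
qed

lemma core_iff:
  assumes phi: "\<phi> \<in> homs F G"
  shows "h \<in> core \<phi> \<longleftrightarrow> h \<in> carrier G \<and> (\<forall>f\<in>carrier F. \<phi> f \<otimes>\<^bsub>G\<^esub> h \<otimes>\<^bsub>G\<^esub> inv\<^bsub>G\<^esub> (\<phi> f) \<in> H)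
     \<and> (\<forall>k\<in>K. h \<otimes>\<^bsub>G\<^esub> \<phi> k = \<phi> k \<otimes>\<^bsub>G\<^esub> h)"
proof -
  interpret A: group_hom F G \<phi> by (rule homs_gh[OF phi])
  show ?thesis unfolding core_def phi_core_def K_def using conj_set_iff by auto
qed

lemma core_carrier: "\<phi> \<in> homs F G \<Longrightarrow> h \<in> core \<phi> \<Longrightarrow> h \<in> carrier G"
  using core_iff by blast

lemma core_H: "\<phi> \<in> homs F G \<Longrightarrow> h \<in> core \<phi> \<Longrightarrow> h \<in> H"
proof -
  assume phi: "\<phi> \<in> homs F G" and h: "h \<in> core \<phi>"
  interpret A: group_hom F G \<phi> by (rule homs_gh[OF phi])
  have "\<phi> \<one>\<^bsub>F\<^esub> \<otimes>\<^bsub>G\<^esub> h \<otimes>\<^bsub>G\<^esub> inv\<^bsub>G\<^esub> (\<phi> \<one>\<^bsub>F\<^esub>) \<in> H" using h core_iff[OF phi] by blast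
  then show ?thesis using core_carrier[OF phi h] by simp
qed

lemma core_Cz: "\<phi> \<in> homs F G \<Longrightarrow> h \<in> core \<phi> \<Longrightarrow> Cz \<phi> h"
  unfolding Cz_def using core_iff by blast

lemma core_subgroup: assumes phi: "\<phi> \<in> homs F G" shows "subgroup (core \<phi>) G"
proof -
  interpret A: group_hom F G \<phi> by (rule homs_gh[OF phi])
  have Hm: "x \<otimes>\<^bsub>G\<^esub> y \<in> H" if "x \<in> H" "y \<in> H" for x y using subgroup.m_closed[OF HG that] .
  have Hi: "inv\<^bsub>G\<^esub> x \<in> H" if "x \<in> H" for x using subgroup.m_inv_closed[OF HG that] .
  show ?thesis
  proof (rule G.subgroupI)
    show "core \<phi> \<subseteq> carrier G" using core_carrier[OF phi] by blast
    show "core \<phi> \<noteq> {}"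
    proof -
      have "\<one>\<^bsub>G\<^esub> \<in> core \<phi>" using core_iff[OF phi] subgroup.one_closed[OF HG] K_carrier by fastforce
      then show ?thesis by blast
    qed
  next
    fix a assume a: "a \<in> core \<phi>"
    have ac: "a \<in> carrier G" using core_carrier[OF phi a] .
    show "inv\<^bsub>G\<^esub> a \<in> core \<phi>" unfolding core_iff[OF phi]
    proof (intro conjI ballI)
      show "inv\<^bsub>G\<^esub> a \<in> carrier G" using ac by simp
      fix f assume f: "f \<in> carrier F"
      have "\<phi> f \<otimes>\<^bsub>G\<^esub> a \<otimes>\<^bsub>G\<^esub> inv\<^bsub>G\<^esub> (\<phi> f) \<in> H" using a f core_iff[OF phi] by blast
      then have "inv\<^bsub>G\<^esub> (\<phi> f \<otimes>\<^bsub>G\<^esub> a \<otimes>\<^bsub>G\<^esub> inv\<^bsub>G\<^esub> (\<phi> f)) \<in> H" by (rule Hi)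
      then show "\<phi> f \<otimes>\<^bsub>G\<^esub> inv\<^bsub>G\<^esub> a \<otimes>\<^bsub>G\<^esub> inv\<^bsub>G\<^esub> (\<phi> f) \<in> H"
        using ac f by (simp add: G.inv_mult_group G.m_assoc)
    next
      fix k assume k: "k \<in> K"
      have "a \<otimes>\<^bsub>G\<^esub> \<phi> k = \<phi> k \<otimes>\<^bsub>G\<^esub> a" using a k core_iff[OF phi] by blast
      then show "inv\<^bsub>G\<^esub> a \<otimes>\<^bsub>G\<^esub> \<phi> k = \<phi> k \<otimes>\<^bsub>G\<^esub> inv\<^bsub>G\<^esub> a"
        using ac K_carrier[OF k] by (intro G.comm_inv) simp_all
    qed
  next
    fix a b assume a: "a \<in> core \<phi>" and b: "b \<in> core \<phi>"
    have ac: "a \<in> carrier G" using core_carrier[OF phi a] .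
    have bc: "b \<in> carrier G" using core_carrier[OF phi b] .
    show "a \<otimes>\<^bsub>G\<^esub> b \<in> core \<phi>" unfolding core_iff[OF phi]
    proof (intro conjI ballI)
      show "a \<otimes>\<^bsub>G\<^esub> b \<in> carrier G" using ac bc by simp
      fix f assume f: "f \<in> carrier F"
      have "(\<phi> f \<otimes>\<^bsub>G\<^esub> a \<otimes>\<^bsub>G\<^esub> inv\<^bsub>G\<^esub> (\<phi> f)) \<otimes>\<^bsub>G\<^esub> (\<phi> f \<otimes>\<^bsub>G\<^esub> b \<otimes>\<^bsub>G\<^esub> inv\<^bsub>G\<^esub> (\<phi> f)) \<in> H"
        using a b f core_iff[OF phi] Hm by blast
      then show "\<phi> f \<otimes>\<^bsub>G\<^esub> (a \<otimes>\<^bsub>G\<^esub> b) \<otimes>\<^bsub>G\<^esub> inv\<^bsub>G\<^esub> (\<phi> f) \<in> H"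
        using ac bc f by (simp add: G.m_assoc)
    next
      fix k assume k: "k \<in> K"
      have "a \<otimes>\<^bsub>G\<^esub> \<phi> k = \<phi> k \<otimes>\<^bsub>G\<^esub> a" "b \<otimes>\<^bsub>G\<^esub> \<phi> k = \<phi> k \<otimes>\<^bsub>G\<^esub> b" using a b k core_iff[OF phi] by blast+
      then show "a \<otimes>\<^bsub>G\<^esub> b \<otimes>\<^bsub>G\<^esub> \<phi> k = \<phi> k \<otimes>\<^bsub>G\<^esub> (a \<otimes>\<^bsub>G\<^esub> b)"
        using ac bc K_carrier[OF k] by (intro G.comm_mult) simp_all
    qed
  qed
qed


lemma core_normal:
  assumes phi: "\<phi> \<in> homs F G" and h: "h \<in> core \<phi>" and f: "f \<in> carrier F"
  shows "\<phi> f \<otimes>\<^bsub>G\<^esub> h \<otimes>\<^bsub>G\<^esub> inv\<^bsub>G\<^esub> (\<phi> f) \<in> core \<phi>"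
proof -
  interpret A: group_hom F G \<phi> by (rule homs_gh[OF phi])
  have hc: "h \<in> carrier G" using core_carrier[OF phi h] .
  have pf: "\<phi> f \<in> carrier G" using f by simp
  show ?thesis unfolding core_iff[OF phi]
  proof (intro conjI ballI)
    show "\<phi> f \<otimes>\<^bsub>G\<^esub> h \<otimes>\<^bsub>G\<^esub> inv\<^bsub>G\<^esub> (\<phi> f) \<in> carrier G" using hc pf by simp
    fix f' assume f': "f' \<in> carrier F"
    have ff: "f' \<otimes>\<^bsub>F\<^esub> f \<in> carrier F" using f f' by simp
    have "\<forall>f\<in>carrier F. \<phi> f \<otimes>\<^bsub>G\<^esub> h \<otimes>\<^bsub>G\<^esub> inv\<^bsub>G\<^esub> (\<phi> f) \<in> H"
      using h core_iff[OF phi] by blast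
    then have "\<phi> (f' \<otimes>\<^bsub>F\<^esub> f) \<otimes>\<^bsub>G\<^esub> h \<otimes>\<^bsub>G\<^esub> inv\<^bsub>G\<^esub> (\<phi> (f' \<otimes>\<^bsub>F\<^esub> f)) \<in> H"
      using ff by blast
    then show "\<phi> f' \<otimes>\<^bsub>G\<^esub> (\<phi> f \<otimes>\<^bsub>G\<^esub> h \<otimes>\<^bsub>G\<^esub> inv\<^bsub>G\<^esub> (\<phi> f)) \<otimes>\<^bsub>G\<^esub> inv\<^bsub>G\<^esub> (\<phi> f') \<in> H"
      using f f' hc by (simp add: G.m_assoc G.inv_mult_group)
  next
    fix k assume k: "k \<in> K"
    define k' where "k' = inv\<^bsub>F\<^esub> f \<otimes>\<^bsub>F\<^esub> k \<otimes>\<^bsub>F\<^esub> f"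
    have k': "k' \<in> K" unfolding k'_def by (rule K_conj'[OF f k])
    have kc: "k \<in> carrier F" "k' \<in> carrier F" using K_carrier k k' by auto
    have "f \<otimes>\<^bsub>F\<^esub> k' \<otimes>\<^bsub>F\<^esub> inv\<^bsub>F\<^esub> f = k" unfolding k'_def using f kc by (simp add: F.m_assoc)
    then have pk: "\<phi> k = \<phi> f \<otimes>\<^bsub>G\<^esub> \<phi> k' \<otimes>\<^bsub>G\<^esub> inv\<^bsub>G\<^esub> (\<phi> f)" using f kc by (metis A.hom_inv A.hom_mult F.inv_closed F.m_closed)
    have cm: "h \<otimes>\<^bsub>G\<^esub> \<phi> k' = \<phi> k' \<otimes>\<^bsub>G\<^esub> h" using h k' core_iff[OF phi] by blast
    have pk': "\<phi> k' \<in> carrier G" using kc by simp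
    have "\<phi> f \<otimes>\<^bsub>G\<^esub> h \<otimes>\<^bsub>G\<^esub> inv\<^bsub>G\<^esub> (\<phi> f) \<otimes>\<^bsub>G\<^esub> \<phi> k = \<phi> f \<otimes>\<^bsub>G\<^esub> (h \<otimes>\<^bsub>G\<^esub> \<phi> k') \<otimes>\<^bsub>G\<^esub> inv\<^bsub>G\<^esub> (\<phi> f)"
      unfolding pk using pf hc pk' by (simp add: G.m_assoc)
    also have "\<dots> = \<phi> f \<otimes>\<^bsub>G\<^esub> (\<phi> k' \<otimes>\<^bsub>G\<^esub> h) \<otimes>\<^bsub>G\<^esub> inv\<^bsub>G\<^esub> (\<phi> f)" unfolding cm ..
    also have "\<dots> = \<phi> k \<otimes>\<^bsub>G\<^esub> (\<phi> f \<otimes>\<^bsub>G\<^esub> h \<otimes>\<^bsub>G\<^esub> inv\<^bsub>G\<^esub> (\<phi> f))"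
      unfolding pk using pf hc pk' by (simp add: G.m_assoc)
    finally show "\<phi> f \<otimes>\<^bsub>G\<^esub> h \<otimes>\<^bsub>G\<^esub> inv\<^bsub>G\<^esub> (\<phi> f) \<otimes>\<^bsub>G\<^esub> \<phi> k = \<phi> k \<otimes>\<^bsub>G\<^esub> (\<phi> f \<otimes>\<^bsub>G\<^esub> h \<otimes>\<^bsub>G\<^esub> inv\<^bsub>G\<^esub> (\<phi> f))" .
  qed
qed

lemma core_normal':
  assumes phi: "\<phi> \<in> homs F G" and h: "h \<in> core \<phi>" and f: "f \<in> carrier F"
  shows "inv\<^bsub>G\<^esub> (\<phi> f) \<otimes>\<^bsub>G\<^esub> h \<otimes>\<^bsub>G\<^esub> \<phi> f \<in> core \<phi>"
proof -
  interpret A: group_hom F G \<phi> by (rule homs_gh[OF phi])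
  have "\<phi> (inv\<^bsub>F\<^esub> f) \<otimes>\<^bsub>G\<^esub> h \<otimes>\<^bsub>G\<^esub> inv\<^bsub>G\<^esub> (\<phi> (inv\<^bsub>F\<^esub> f)) \<in> core \<phi>"
    by (rule core_normal[OF phi h F.inv_closed[OF f]])
  then show ?thesis using f by simp
qed

lemma core_M_diff:
  assumes phi: "\<phi> \<in> homs F G" and c: "c \<in> core \<phi>" and f: "f \<in> carrier F"
  shows "inv\<^bsub>G\<^esub> (\<phi> f) \<otimes>\<^bsub>G\<^esub> M \<phi> c f \<in> core \<phi>"
proof -
  interpret A: group_hom F G \<phi> by (rule homs_gh[OF phi])
  have cc: "c \<in> carrier G" using core_carrier[OF phi c] .
  have kc: "kpart f \<in> carrier F" using kpart_carrier[OF f] .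
  have pt: "\<phi> t \<in> carrier G" using t by simp
  have S: "subgroup (core \<phi>) G" by (rule core_subgroup[OF phi])
  have in_core: "inv\<^bsub>G\<^esub> (\<phi> t [^]\<^bsub>G\<^esub> deg f) \<otimes>\<^bsub>G\<^esub> (\<phi> t \<otimes>\<^bsub>G\<^esub> c) [^]\<^bsub>G\<^esub> deg f \<in> core \<phi>"
    by (rule G.pow_core_int[OF S pt core_normal[OF phi _ t(1)] core_normal'[OF phi _ t(1)] c])
  have pf: "\<phi> f = \<phi> (kpart f) \<otimes>\<^bsub>G\<^esub> \<phi> t [^]\<^bsub>G\<^esub> deg f"
    using kpart_decomp[OF f] kc t by (metis A.hom_int_pow A.hom_mult F.int_pow_closed)
  have "M \<phi> c f = \<phi> (kpart f) \<otimes>\<^bsub>G\<^esub> (\<phi> t \<otimes>\<^bsub>G\<^esub> c) [^]\<^bsub>G\<^esub> deg f"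
    using f by (simp add: M_def ext_def)
  then have "inv\<^bsub>G\<^esub> (\<phi> f) \<otimes>\<^bsub>G\<^esub> M \<phi> c f = inv\<^bsub>G\<^esub> (\<phi> t [^]\<^bsub>G\<^esub> deg f) \<otimes>\<^bsub>G\<^esub> (\<phi> t \<otimes>\<^bsub>G\<^esub> c) [^]\<^bsub>G\<^esub> deg f"
    unfolding pf using kc pt cc by (simp add: G.m_assoc G.inv_mult_group)
  then show ?thesis using in_core by simp
qed

lemma core_sup:
  assumes phi: "\<phi> \<in> homs F G" and psi: "\<psi> \<in> homs F G"
    and agree: "\<And>k. k \<in> K \<Longrightarrow> \<psi> k = \<phi> k"
    and diff: "\<And>f. f \<in> carrier F \<Longrightarrow> inv\<^bsub>G\<^esub> (\<phi> f) \<otimes>\<^bsub>G\<^esub> \<psi> f \<in> core \<phi>"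
  shows "core \<phi> \<subseteq> core \<psi>"
proof
  interpret A: group_hom F G \<phi> by (rule homs_gh[OF phi])
  interpret B: group_hom F G \<psi> by (rule homs_gh[OF psi])
  have S: "subgroup (core \<phi>) G" by (rule core_subgroup[OF phi])
  fix h assume h: "h \<in> core \<phi>"
  have hc: "h \<in> carrier G" using core_carrier[OF phi h] .
  show "h \<in> core \<psi>" unfolding core_iff[OF psi]
  proof (intro conjI ballI)
    show "h \<in> carrier G" by (rule hc)
    fix f assume f: "f \<in> carrier F"
    define s where "s = inv\<^bsub>G\<^esub> (\<phi> f) \<otimes>\<^bsub>G\<^esub> \<psi> f"
    have sS: "s \<in> core \<phi>" unfolding s_def by (rule diff[OF f])
    have sc: "s \<in> carrier G" using core_carrier[OF phi sS] .
    have ps: "\<psi> f = \<phi> f \<otimes>\<^bsub>G\<^esub> s" unfolding s_def using f by (simp add: G.m_assoc[symmetric])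
    have "s \<otimes>\<^bsub>G\<^esub> h \<otimes>\<^bsub>G\<^esub> inv\<^bsub>G\<^esub> s \<in> core \<phi>"
      using subgroup.m_closed[OF S subgroup.m_closed[OF S sS h] subgroup.m_inv_closed[OF S sS]] .
    then have "\<phi> f \<otimes>\<^bsub>G\<^esub> (s \<otimes>\<^bsub>G\<^esub> h \<otimes>\<^bsub>G\<^esub> inv\<^bsub>G\<^esub> s) \<otimes>\<^bsub>G\<^esub> inv\<^bsub>G\<^esub> (\<phi> f) \<in> H"
      using f core_iff[OF phi] by blast
    then show "\<psi> f \<otimes>\<^bsub>G\<^esub> h \<otimes>\<^bsub>G\<^esub> inv\<^bsub>G\<^esub> (\<psi> f) \<in> H"
      unfolding ps using f sc hc by (simp add: G.m_assoc G.inv_mult_group)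
  next
    fix k assume k: "k \<in> K"
    show "h \<otimes>\<^bsub>G\<^esub> \<psi> k = \<psi> k \<otimes>\<^bsub>G\<^esub> h" using agree[OF k] h k core_iff[OF phi] by simp
  qed
qed

lemma Cz_mult: "\<phi> \<in> homs F G \<Longrightarrow> Cz \<phi> c \<Longrightarrow> Cz \<phi> d \<Longrightarrow> Cz \<phi> (c \<otimes>\<^bsub>G\<^esub> d)"
proof -
  assume phi: "\<phi> \<in> homs F G" and c: "Cz \<phi> c" and d: "Cz \<phi> d"
  interpret A: group_hom F G \<phi> by (rule homs_gh[OF phi])
  show ?thesis unfolding Cz_def
  proof (intro conjI ballI)
    show "c \<otimes>\<^bsub>G\<^esub> d \<in> carrier G" using c d by (simp add: Cz_def)
    fix k assume k: "k \<in> K"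
    show "c \<otimes>\<^bsub>G\<^esub> d \<otimes>\<^bsub>G\<^esub> \<phi> k = \<phi> k \<otimes>\<^bsub>G\<^esub> (c \<otimes>\<^bsub>G\<^esub> d)"
      using c d k K_carrier[OF k] unfolding Cz_def by (intro G.comm_mult) simp_all
  qed
qed

lemma M_M:
  assumes phi: "\<phi> \<in> homs F G" and c: "Cz \<phi> c" and d: "Cz \<phi> d"
  shows "M (M \<phi> c) d = M \<phi> (c \<otimes>\<^bsub>G\<^esub> d)"
proof -
  interpret A: group_hom F G \<phi> by (rule homs_gh[OF phi])
  have m1: "M \<phi> c \<in> homs F G" by (rule M_props(1)[OF phi c])
  have d': "Cz (M \<phi> c) d" using d M_props(2)[OF phi c] by (simp add: Cz_def)
  have cd: "Cz \<phi> (c \<otimes>\<^bsub>G\<^esub> d)" by (rule Cz_mult[OF phi c d])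
  have "M \<phi> (c \<otimes>\<^bsub>G\<^esub> d) = M (M \<phi> c) d"
  proof (rule M_char[OF m1 d' M_props(1)[OF phi cd]])
    show "\<And>k. k \<in> K \<Longrightarrow> M \<phi> (c \<otimes>\<^bsub>G\<^esub> d) k = M \<phi> c k"
      using M_props(2)[OF phi c] M_props(2)[OF phi cd] by simp
    show "M \<phi> (c \<otimes>\<^bsub>G\<^esub> d) t = M \<phi> c t \<otimes>\<^bsub>G\<^esub> d"
      using M_props(3)[OF phi c] M_props(3)[OF phi cd] c d t by (simp add: Cz_def G.m_assoc)
  qed
  then show ?thesis by simp
qed

lemma M_one: "\<phi> \<in> homs F G \<Longrightarrow> M \<phi> \<one>\<^bsub>G\<^esub> = \<phi>"
proof -
  assume phi: "\<phi> \<in> homs F G"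
  interpret A: group_hom F G \<phi> by (rule homs_gh[OF phi])
  have c1: "Cz \<phi> \<one>\<^bsub>G\<^esub>" unfolding Cz_def using K_carrier by simp
  show ?thesis using M_char[OF phi c1 phi] t by simp
qed

lemma core_M:
  assumes phi: "\<phi> \<in> homs F G" and c: "c \<in> core \<phi>"
  shows "core (M \<phi> c) = core \<phi>"
proof
  have cz: "Cz \<phi> c" by (rule core_Cz[OF phi c])
  have m1: "M \<phi> c \<in> homs F G" by (rule M_props(1)[OF phi cz])
  have sub: "core \<phi> \<subseteq> core (M \<phi> c)"
    by (rule core_sup[OF phi m1 M_props(2)[OF phi cz] core_M_diff[OF phi c]])
  then show "core \<phi> \<subseteq> core (M \<phi> c)" .
  have S: "subgroup (core \<phi>) G" by (rule core_subgroup[OF phi])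
  have ic: "inv\<^bsub>G\<^esub> c \<in> core \<phi>" by (rule subgroup.m_inv_closed[OF S c])
  have ic2: "inv\<^bsub>G\<^esub> c \<in> core (M \<phi> c)" using ic sub by blast
  have cc: "c \<in> carrier G" using core_carrier[OF phi c] .
  have bk: "M (M \<phi> c) (inv\<^bsub>G\<^esub> c) = \<phi>"
    using M_M[OF phi cz core_Cz[OF phi ic]] M_one[OF phi] cc by simp
  have "core (M \<phi> c) \<subseteq> core (M (M \<phi> c) (inv\<^bsub>G\<^esub> c))"
    by (rule core_sup[OF m1 M_props(1)[OF m1 core_Cz[OF m1 ic2]] M_props(2)[OF m1 core_Cz[OF m1 ic2]] core_M_diff[OF m1 ic2]])
  then show "core (M \<phi> c) \<subseteq> core \<phi>" unfolding bk .
qed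


definition cj where "cj h \<phi> = (\<lambda>f\<in>carrier F. inv\<^bsub>G\<^esub> h \<otimes>\<^bsub>G\<^esub> \<phi> f \<otimes>\<^bsub>G\<^esub> h)"

lemma cj_homs: assumes phi: "\<phi> \<in> homs F G" and h: "h \<in> carrier G" shows "cj h \<phi> \<in> homs F G"
proof -
  interpret A: group_hom F G \<phi> by (rule homs_gh[OF phi])
  have "inv\<^bsub>G\<^esub> h \<otimes>\<^bsub>G\<^esub> \<phi> (x \<otimes>\<^bsub>F\<^esub> y) \<otimes>\<^bsub>G\<^esub> h =
        (inv\<^bsub>G\<^esub> h \<otimes>\<^bsub>G\<^esub> \<phi> x \<otimes>\<^bsub>G\<^esub> h) \<otimes>\<^bsub>G\<^esub> (inv\<^bsub>G\<^esub> h \<otimes>\<^bsub>G\<^esub> \<phi> y \<otimes>\<^bsub>G\<^esub> h)"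
    if "x \<in> carrier F" "y \<in> carrier F" for x y using that h by (simp add: G.m_assoc)
  then show ?thesis using h unfolding homs_def hom_def cj_def by auto
qed

lemma cj_cj: assumes phi: "\<phi> \<in> homs F G" and h: "h \<in> carrier G" and h': "h' \<in> carrier G"
  shows "cj h (cj h' \<phi>) = cj (h' \<otimes>\<^bsub>G\<^esub> h) \<phi>"
proof -
  interpret A: group_hom F G \<phi> by (rule homs_gh[OF phi])
  show ?thesis unfolding cj_def using h h' by (auto simp: G.m_assoc G.inv_mult_group)
qed

lemma cj_one: assumes phi: "\<phi> \<in> homs F G" shows "cj \<one>\<^bsub>G\<^esub> \<phi> = \<phi>"
proof -
  interpret A: group_hom F G \<phi> by (rule homs_gh[OF phi])
  show ?thesis using phi unfolding cj_def homs_def extensional_def by auto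
qed

lemma cj_M:
  assumes phi: "\<phi> \<in> homs F G" and h: "h \<in> carrier G" and c: "Cz \<phi> c"
  shows "cj h (M \<phi> c) = M (cj h \<phi>) (inv\<^bsub>G\<^esub> h \<otimes>\<^bsub>G\<^esub> c \<otimes>\<^bsub>G\<^esub> h)"
proof -
  interpret A: group_hom F G \<phi> by (rule homs_gh[OF phi])
  have cc: "c \<in> carrier G" using c by (simp add: Cz_def)
  have ch: "cj h \<phi> \<in> homs F G" by (rule cj_homs[OF phi h])
  have cz: "Cz (cj h \<phi>) (inv\<^bsub>G\<^esub> h \<otimes>\<^bsub>G\<^esub> c \<otimes>\<^bsub>G\<^esub> h)" unfolding Cz_def
  proof (intro conjI ballI)
    show "inv\<^bsub>G\<^esub> h \<otimes>\<^bsub>G\<^esub> c \<otimes>\<^bsub>G\<^esub> h \<in> carrier G" using h cc by simp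
    fix k assume k: "k \<in> K"
    have kc: "k \<in> carrier F" using K_carrier[OF k] .
    have e: "c \<otimes>\<^bsub>G\<^esub> \<phi> k = \<phi> k \<otimes>\<^bsub>G\<^esub> c" using c k by (simp add: Cz_def)
    have "inv\<^bsub>G\<^esub> h \<otimes>\<^bsub>G\<^esub> c \<otimes>\<^bsub>G\<^esub> h \<otimes>\<^bsub>G\<^esub> cj h \<phi> k = inv\<^bsub>G\<^esub> h \<otimes>\<^bsub>G\<^esub> (c \<otimes>\<^bsub>G\<^esub> \<phi> k) \<otimes>\<^bsub>G\<^esub> h"
      using kc h cc by (simp add: cj_def G.m_assoc)
    also have "\<dots> = inv\<^bsub>G\<^esub> h \<otimes>\<^bsub>G\<^esub> (\<phi> k \<otimes>\<^bsub>G\<^esub> c) \<otimes>\<^bsub>G\<^esub> h" unfolding e ..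
    also have "\<dots> = cj h \<phi> k \<otimes>\<^bsub>G\<^esub> (inv\<^bsub>G\<^esub> h \<otimes>\<^bsub>G\<^esub> c \<otimes>\<^bsub>G\<^esub> h)"
      using kc h cc by (simp add: cj_def G.m_assoc)
    finally show "inv\<^bsub>G\<^esub> h \<otimes>\<^bsub>G\<^esub> c \<otimes>\<^bsub>G\<^esub> h \<otimes>\<^bsub>G\<^esub> cj h \<phi> k = cj h \<phi> k \<otimes>\<^bsub>G\<^esub> (inv\<^bsub>G\<^esub> h \<otimes>\<^bsub>G\<^esub> c \<otimes>\<^bsub>G\<^esub> h)" .
  qed
  show ?thesis
  proof (rule M_char[OF ch cz cj_homs[OF M_props(1)[OF phi c] h]])
    show "\<And>k. k \<in> K \<Longrightarrow> cj h (M \<phi> c) k = cj h \<phi> k"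
      using M_props(2)[OF phi c] K_carrier by (simp add: cj_def)
    show "cj h (M \<phi> c) t = cj h \<phi> t \<otimes>\<^bsub>G\<^esub> (inv\<^bsub>G\<^esub> h \<otimes>\<^bsub>G\<^esub> c \<otimes>\<^bsub>G\<^esub> h)"
      using M_props(3)[OF phi c] t h cc by (simp add: cj_def G.m_assoc)
  qed
qed

lemma core_cj_sup:
  assumes phi: "\<phi> \<in> homs F G" and h: "h \<in> H" and y: "y \<in> core \<phi>"
  shows "inv\<^bsub>G\<^esub> h \<otimes>\<^bsub>G\<^esub> y \<otimes>\<^bsub>G\<^esub> h \<in> core (cj h \<phi>)"
proof -
  interpret A: group_hom F G \<phi> by (rule homs_gh[OF phi])
  have hc: "h \<in> carrier G" using subgroup.mem_carrier[OF HG h] .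
  have yc: "y \<in> carrier G" using core_carrier[OF phi y] .
  have ch: "cj h \<phi> \<in> homs F G" by (rule cj_homs[OF phi hc])
  show ?thesis unfolding core_iff[OF ch]
  proof (intro conjI ballI)
    show "inv\<^bsub>G\<^esub> h \<otimes>\<^bsub>G\<^esub> y \<otimes>\<^bsub>G\<^esub> h \<in> carrier G" using hc yc by simp
    fix f assume f: "f \<in> carrier F"
    have "\<phi> f \<otimes>\<^bsub>G\<^esub> y \<otimes>\<^bsub>G\<^esub> inv\<^bsub>G\<^esub> (\<phi> f) \<in> H" using y f core_iff[OF phi] by blast
    then have "inv\<^bsub>G\<^esub> h \<otimes>\<^bsub>G\<^esub> (\<phi> f \<otimes>\<^bsub>G\<^esub> y \<otimes>\<^bsub>G\<^esub> inv\<^bsub>G\<^esub> (\<phi> f)) \<otimes>\<^bsub>G\<^esub> h \<in> H"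
      using subgroup.m_closed[OF HG subgroup.m_closed[OF HG subgroup.m_inv_closed[OF HG h]] h] by blast
    then show "cj h \<phi> f \<otimes>\<^bsub>G\<^esub> (inv\<^bsub>G\<^esub> h \<otimes>\<^bsub>G\<^esub> y \<otimes>\<^bsub>G\<^esub> h) \<otimes>\<^bsub>G\<^esub> inv\<^bsub>G\<^esub> (cj h \<phi> f) \<in> H"
      using f hc yc by (simp add: cj_def G.m_assoc G.inv_mult_group)
  next
    fix k assume k: "k \<in> K"
    have kc: "k \<in> carrier F" using K_carrier[OF k] .
    have e: "y \<otimes>\<^bsub>G\<^esub> \<phi> k = \<phi> k \<otimes>\<^bsub>G\<^esub> y" using y k core_iff[OF phi] by blast
    have "inv\<^bsub>G\<^esub> h \<otimes>\<^bsub>G\<^esub> y \<otimes>\<^bsub>G\<^esub> h \<otimes>\<^bsub>G\<^esub> cj h \<phi> k = inv\<^bsub>G\<^esub> h \<otimes>\<^bsub>G\<^esub> (y \<otimes>\<^bsub>G\<^esub> \<phi> k) \<otimes>\<^bsub>G\<^esub> h"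
      using kc hc yc by (simp add: cj_def G.m_assoc)
    also have "\<dots> = inv\<^bsub>G\<^esub> h \<otimes>\<^bsub>G\<^esub> (\<phi> k \<otimes>\<^bsub>G\<^esub> y) \<otimes>\<^bsub>G\<^esub> h" unfolding e ..
    also have "\<dots> = cj h \<phi> k \<otimes>\<^bsub>G\<^esub> (inv\<^bsub>G\<^esub> h \<otimes>\<^bsub>G\<^esub> y \<otimes>\<^bsub>G\<^esub> h)"
      using kc hc yc by (simp add: cj_def G.m_assoc)
    finally show "inv\<^bsub>G\<^esub> h \<otimes>\<^bsub>G\<^esub> y \<otimes>\<^bsub>G\<^esub> h \<otimes>\<^bsub>G\<^esub> cj h \<phi> k = cj h \<phi> k \<otimes>\<^bsub>G\<^esub> (inv\<^bsub>G\<^esub> h \<otimes>\<^bsub>G\<^esub> y \<otimes>\<^bsub>G\<^esub> h)" .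
  qed
qed

lemma core_cj_sub:
  assumes phi: "\<phi> \<in> homs F G" and h: "h \<in> H" and x: "x \<in> core (cj h \<phi>)"
  shows "h \<otimes>\<^bsub>G\<^esub> x \<otimes>\<^bsub>G\<^esub> inv\<^bsub>G\<^esub> h \<in> core \<phi>"
proof -
  have hc: "h \<in> carrier G" using subgroup.mem_carrier[OF HG h] .
  have ih: "inv\<^bsub>G\<^esub> h \<in> H" using subgroup.m_inv_closed[OF HG h] .
  have ch: "cj h \<phi> \<in> homs F G" by (rule cj_homs[OF phi hc])
  have "inv\<^bsub>G\<^esub> (inv\<^bsub>G\<^esub> h) \<otimes>\<^bsub>G\<^esub> x \<otimes>\<^bsub>G\<^esub> inv\<^bsub>G\<^esub> h \<in> core (cj (inv\<^bsub>G\<^esub> h) (cj h \<phi>))"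
    by (rule core_cj_sup[OF ch ih x])
  also have "cj (inv\<^bsub>G\<^esub> h) (cj h \<phi>) = \<phi>"
    using cj_cj[OF phi _ hc, of "inv\<^bsub>G\<^esub> h"] hc cj_one[OF phi] by simp
  finally show ?thesis using hc by simp
qed


definition E where "E \<phi> \<psi> \<longleftrightarrow> (\<exists>h\<in>H. \<exists>c\<in>core \<phi>. \<psi> = cj h (M \<phi> c))"

lemma core_sub_H: "\<phi> \<in> homs F G \<Longrightarrow> c \<in> core \<phi> \<Longrightarrow> c \<in> carrier G"
  by (rule core_carrier)

lemma E_homs: assumes phi: "\<phi> \<in> homs F G" and e: "E \<phi> \<psi>" shows "\<psi> \<in> homs F G"
proof -
  obtain h c where h: "h \<in> H" and c: "c \<in> core \<phi>" and psi: "\<psi> = cj h (M \<phi> c)" using e E_def by blast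
  show ?thesis unfolding psi
    by (rule cj_homs[OF M_props(1)[OF phi core_Cz[OF phi c]] subgroup.mem_carrier[OF HG h]])
qed

lemma E_refl: assumes phi: "\<phi> \<in> homs F G" shows "E \<phi> \<phi>"
proof -
  have "\<one>\<^bsub>G\<^esub> \<in> H" using subgroup.one_closed[OF HG] .
  moreover have "\<one>\<^bsub>G\<^esub> \<in> core \<phi>" using subgroup.one_closed[OF core_subgroup[OF phi]] .
  moreover have "\<phi> = cj \<one>\<^bsub>G\<^esub> (M \<phi> \<one>\<^bsub>G\<^esub>)" using M_one[OF phi] cj_one[OF phi] by simp
  ultimately show ?thesis unfolding E_def by blast
qed

lemma E_trans:
  assumes phi: "\<phi> \<in> homs F G" and e1: "E \<phi> \<psi>" and e2: "E \<psi> \<chi>"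
  shows "E \<phi> \<chi>"
proof -
  obtain h c where h: "h \<in> H" and c: "c \<in> core \<phi>" and psi: "\<psi> = cj h (M \<phi> c)" using e1 E_def by blast
  obtain h' c' where h': "h' \<in> H" and c': "c' \<in> core \<psi>" and chi: "\<chi> = cj h' (M \<psi> c')" using e2 E_def by blast
  have hc: "h \<in> carrier G" using subgroup.mem_carrier[OF HG h] .
  have hc': "h' \<in> carrier G" using subgroup.mem_carrier[OF HG h'] .
  define \<theta> where "\<theta> = M \<phi> c"
  have th: "\<theta> \<in> homs F G" unfolding \<theta>_def by (rule M_props(1)[OF phi core_Cz[OF phi c]])
  have psi': "\<psi> = cj h \<theta>" using psi \<theta>_def by simp
  have psih: "\<psi> \<in> homs F G" using psi' cj_homs[OF th hc] by simp
  have cc': "c' \<in> carrier G" using core_carrier[OF psih c'] .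
  define d where "d = h \<otimes>\<^bsub>G\<^esub> c' \<otimes>\<^bsub>G\<^esub> inv\<^bsub>G\<^esub> h"
  have dth: "d \<in> core \<theta>" unfolding d_def by (rule core_cj_sub[OF th h c'[unfolded psi']])
  have dphi: "d \<in> core \<phi>" using dth core_M[OF phi c] \<theta>_def by simp
  have "cj h (M \<theta> d) = M (cj h \<theta>) (inv\<^bsub>G\<^esub> h \<otimes>\<^bsub>G\<^esub> d \<otimes>\<^bsub>G\<^esub> h)"
    by (rule cj_M[OF th hc core_Cz[OF th dth]])
  also have "inv\<^bsub>G\<^esub> h \<otimes>\<^bsub>G\<^esub> d \<otimes>\<^bsub>G\<^esub> h = c'" unfolding d_def using hc cc' by (simp add: G.m_assoc)
  finally have e3: "M \<psi> c' = cj h (M \<theta> d)" using psi' by simp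
  have e4: "M \<theta> d = M \<phi> (c \<otimes>\<^bsub>G\<^esub> d)" unfolding \<theta>_def by (rule M_M[OF phi core_Cz[OF phi c] core_Cz[OF phi dphi]])
  have cd: "c \<otimes>\<^bsub>G\<^esub> d \<in> core \<phi>" using subgroup.m_closed[OF core_subgroup[OF phi] c dphi] .
  have "\<chi> = cj h' (cj h (M \<phi> (c \<otimes>\<^bsub>G\<^esub> d)))" using chi e3 e4 by simp
  also have "\<dots> = cj (h \<otimes>\<^bsub>G\<^esub> h') (M \<phi> (c \<otimes>\<^bsub>G\<^esub> d))"
    by (rule cj_cj[OF M_props(1)[OF phi core_Cz[OF phi cd]] hc' hc])
  finally show ?thesis unfolding E_def using subgroup.m_closed[OF HG h h'] cd by blast
qed

lemma E_sym:
  assumes phi: "\<phi> \<in> homs F G" and e1: "E \<phi> \<psi>"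
  shows "E \<psi> \<phi>"
proof -
  obtain h c where h: "h \<in> H" and c: "c \<in> core \<phi>" and psi: "\<psi> = cj h (M \<phi> c)" using e1 E_def by blast
  have hc: "h \<in> carrier G" using subgroup.mem_carrier[OF HG h] .
  have cc: "c \<in> carrier G" using core_carrier[OF phi c] .
  define \<theta> where "\<theta> = M \<phi> c"
  have th: "\<theta> \<in> homs F G" unfolding \<theta>_def by (rule M_props(1)[OF phi core_Cz[OF phi c]])
  have psi': "\<psi> = cj h \<theta>" using psi \<theta>_def by simp
  have ic: "inv\<^bsub>G\<^esub> c \<in> core \<phi>" using subgroup.m_inv_closed[OF core_subgroup[OF phi] c] .
  have ict: "inv\<^bsub>G\<^esub> c \<in> core \<theta>" using ic core_M[OF phi c] \<theta>_def by simp
  define c0 where "c0 = inv\<^bsub>G\<^esub> h \<otimes>\<^bsub>G\<^esub> inv\<^bsub>G\<^esub> c \<otimes>\<^bsub>G\<^esub> h"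
  have c0: "c0 \<in> core \<psi>" unfolding c0_def psi' by (rule core_cj_sup[OF th h ict])
  have "M \<psi> c0 = cj h (M \<theta> (inv\<^bsub>G\<^esub> c))"
    unfolding psi' c0_def by (rule cj_M[OF th hc core_Cz[OF th ict], symmetric])
  also have "M \<theta> (inv\<^bsub>G\<^esub> c) = \<phi>"
    unfolding \<theta>_def using M_M[OF phi core_Cz[OF phi c] core_Cz[OF phi ic]] M_one[OF phi] cc by simp
  finally have e: "M \<psi> c0 = cj h \<phi>" .
  have "cj (inv\<^bsub>G\<^esub> h) (M \<psi> c0) = \<phi>"
    unfolding e using cj_cj[OF phi _ hc, of "inv\<^bsub>G\<^esub> h"] hc cj_one[OF phi] by simp
  then show ?thesis unfolding E_def using subgroup.m_inv_closed[OF HG h] c0 by metis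
qed

lemma stab:
  assumes phi: "\<phi> \<in> homs F G" and r: "r \<in> H" and r': "r' \<in> H"
    and c: "c \<in> core \<phi>" and c': "c' \<in> core \<phi>"
    and eq: "cj r (M \<phi> c) = cj r' (M \<phi> c')"
  shows "r \<otimes>\<^bsub>G\<^esub> inv\<^bsub>G\<^esub> r' \<in> core \<phi>"
proof -
  interpret A: group_hom F G \<phi> by (rule homs_gh[OF phi])
  have rc: "r \<in> carrier G" using subgroup.mem_carrier[OF HG r] .
  have rc': "r' \<in> carrier G" using subgroup.mem_carrier[OF HG r'] .
  define e where "e = r \<otimes>\<^bsub>G\<^esub> inv\<^bsub>G\<^esub> r'"
  have ec: "e \<in> carrier G" unfolding e_def using rc rc' by simp
  have eH: "e \<in> H" unfolding e_def using subgroup.m_closed[OF HG r subgroup.m_inv_closed[OF HG r']] .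
  have m1: "M \<phi> c \<in> homs F G" by (rule M_props(1)[OF phi core_Cz[OF phi c]])
  have m2: "M \<phi> c' \<in> homs F G" by (rule M_props(1)[OF phi core_Cz[OF phi c']])
  have "cj (inv\<^bsub>G\<^esub> r') (cj r (M \<phi> c)) = cj (inv\<^bsub>G\<^esub> r') (cj r' (M \<phi> c'))" using eq by simp
  then have eq2: "cj e (M \<phi> c) = M \<phi> c'"
    using cj_cj[OF m1 _ rc, of "inv\<^bsub>G\<^esub> r'"] cj_cj[OF m2 _ rc', of "inv\<^bsub>G\<^esub> r'"] rc' cj_one[OF m2]
    unfolding e_def by simp
  have pt: "\<And>f. f \<in> carrier F \<Longrightarrow> inv\<^bsub>G\<^esub> e \<otimes>\<^bsub>G\<^esub> M \<phi> c f \<otimes>\<^bsub>G\<^esub> e = M \<phi> c' f"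
    using eq2 unfolding cj_def by (metis restrict_apply')
  have key: "inv\<^bsub>G\<^esub> (\<phi> f) \<otimes>\<^bsub>G\<^esub> inv\<^bsub>G\<^esub> e \<otimes>\<^bsub>G\<^esub> \<phi> f \<in> H" if f: "f \<in> carrier F" for f
  proof -
    define a where "a = inv\<^bsub>G\<^esub> (\<phi> f) \<otimes>\<^bsub>G\<^esub> M \<phi> c f"
    define b where "b = inv\<^bsub>G\<^esub> (\<phi> f) \<otimes>\<^bsub>G\<^esub> M \<phi> c' f"
    have aS: "a \<in> core \<phi>" unfolding a_def by (rule core_M_diff[OF phi c f])
    have bS: "b \<in> core \<phi>" unfolding b_def by (rule core_M_diff[OF phi c' f])
    have ac: "a \<in> carrier G" using core_carrier[OF phi aS] .
    have bc: "b \<in> carrier G" using core_carrier[OF phi bS] .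
    have aH: "a \<in> H" using core_H[OF phi aS] .
    have bH: "b \<in> H" using core_H[OF phi bS] .
    have pf: "\<phi> f \<in> carrier G" using f by simp
    have ma: "M \<phi> c f = \<phi> f \<otimes>\<^bsub>G\<^esub> a" unfolding a_def using pf f m1 by (simp add: G.m_assoc[symmetric] homs_def hom_def Pi_def)
    have mb: "M \<phi> c' f = \<phi> f \<otimes>\<^bsub>G\<^esub> b" unfolding b_def using pf f m2 by (simp add: G.m_assoc[symmetric] homs_def hom_def Pi_def)
    have X: "inv\<^bsub>G\<^esub> e \<otimes>\<^bsub>G\<^esub> (\<phi> f \<otimes>\<^bsub>G\<^esub> a) \<otimes>\<^bsub>G\<^esub> e = \<phi> f \<otimes>\<^bsub>G\<^esub> b"
      using pt[OF f] ma mb by simp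
    have "inv\<^bsub>G\<^esub> (\<phi> f) \<otimes>\<^bsub>G\<^esub> inv\<^bsub>G\<^esub> e \<otimes>\<^bsub>G\<^esub> \<phi> f
        = inv\<^bsub>G\<^esub> (\<phi> f) \<otimes>\<^bsub>G\<^esub> (inv\<^bsub>G\<^esub> e \<otimes>\<^bsub>G\<^esub> (\<phi> f \<otimes>\<^bsub>G\<^esub> a) \<otimes>\<^bsub>G\<^esub> e) \<otimes>\<^bsub>G\<^esub> inv\<^bsub>G\<^esub> e \<otimes>\<^bsub>G\<^esub> inv\<^bsub>G\<^esub> a"
      using pf ec ac by (simp add: G.m_assoc)
    also have "\<dots> = b \<otimes>\<^bsub>G\<^esub> inv\<^bsub>G\<^esub> e \<otimes>\<^bsub>G\<^esub> inv\<^bsub>G\<^esub> a"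
      unfolding X using pf bc ec ac by (simp add: G.m_assoc)
    finally show ?thesis
      using subgroup.m_closed[OF HG subgroup.m_closed[OF HG bH subgroup.m_inv_closed[OF HG eH]] subgroup.m_inv_closed[OF HG aH]]
      by simp
  qed
  show ?thesis unfolding e_def[symmetric] core_iff[OF phi]
  proof (intro conjI ballI)
    show "e \<in> carrier G" by (rule ec)
    fix f assume f: "f \<in> carrier F"
    have "inv\<^bsub>G\<^esub> (\<phi> (inv\<^bsub>F\<^esub> f)) \<otimes>\<^bsub>G\<^esub> inv\<^bsub>G\<^esub> e \<otimes>\<^bsub>G\<^esub> \<phi> (inv\<^bsub>F\<^esub> f) \<in> H"
      by (rule key) (simp add: f)
    then have "\<phi> f \<otimes>\<^bsub>G\<^esub> inv\<^bsub>G\<^esub> e \<otimes>\<^bsub>G\<^esub> inv\<^bsub>G\<^esub> (\<phi> f) \<in> H" using f by simp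
    then have "inv\<^bsub>G\<^esub> (\<phi> f \<otimes>\<^bsub>G\<^esub> inv\<^bsub>G\<^esub> e \<otimes>\<^bsub>G\<^esub> inv\<^bsub>G\<^esub> (\<phi> f)) \<in> H"
      by (rule subgroup.m_inv_closed[OF HG])
    then show "\<phi> f \<otimes>\<^bsub>G\<^esub> e \<otimes>\<^bsub>G\<^esub> inv\<^bsub>G\<^esub> (\<phi> f) \<in> H"
      using f ec by (simp add: G.inv_mult_group G.m_assoc)
  next
    fix k assume k: "k \<in> K"
    have kc: "k \<in> carrier F" using K_carrier[OF k] .
    have "inv\<^bsub>G\<^esub> e \<otimes>\<^bsub>G\<^esub> \<phi> k \<otimes>\<^bsub>G\<^esub> e = \<phi> k"
      using pt[OF kc] M_props(2)[OF phi core_Cz[OF phi c] k] M_props(2)[OF phi core_Cz[OF phi c'] k] by simp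
    then have "e \<otimes>\<^bsub>G\<^esub> (inv\<^bsub>G\<^esub> e \<otimes>\<^bsub>G\<^esub> \<phi> k \<otimes>\<^bsub>G\<^esub> e) = e \<otimes>\<^bsub>G\<^esub> \<phi> k" by simp
    then show "e \<otimes>\<^bsub>G\<^esub> \<phi> k = \<phi> k \<otimes>\<^bsub>G\<^esub> e" using ec kc by (simp add: G.m_assoc)
  qed
qed


definition rep where "rep \<phi> h = (SOME r. r \<in> core \<phi> #>\<^bsub>G\<^esub> h)"
definition ccc where "ccc \<phi> h = h \<otimes>\<^bsub>G\<^esub> inv\<^bsub>G\<^esub> (rep \<phi> h)"
definition \<beta> where "\<beta> \<phi> h = cj (rep \<phi> h) (M \<phi> (ccc \<phi> h))"

lemma rep_ex: assumes phi: "\<phi> \<in> homs F G" and h: "h \<in> H"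
  shows "\<exists>s\<in>core \<phi>. rep \<phi> h = s \<otimes>\<^bsub>G\<^esub> h"
proof -
  have hc: "h \<in> carrier G" using subgroup.mem_carrier[OF HG h] .
  have "h \<in> core \<phi> #>\<^bsub>G\<^esub> h" by (rule G.rcos_self[OF hc core_subgroup[OF phi]])
  then have "rep \<phi> h \<in> core \<phi> #>\<^bsub>G\<^esub> h" unfolding rep_def by (rule someI)
  then show ?thesis unfolding r_coset_def by blast
qed

lemma rep_facts: assumes phi: "\<phi> \<in> homs F G" and h: "h \<in> H"
  shows "rep \<phi> h \<in> H" "ccc \<phi> h \<in> core \<phi>" "h = ccc \<phi> h \<otimes>\<^bsub>G\<^esub> rep \<phi> h"
    "core \<phi> #>\<^bsub>G\<^esub> rep \<phi> h = core \<phi> #>\<^bsub>G\<^esub> h"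
proof -
  obtain s where s: "s \<in> core \<phi>" and r: "rep \<phi> h = s \<otimes>\<^bsub>G\<^esub> h" using rep_ex[OF phi h] by blast
  have hc: "h \<in> carrier G" using subgroup.mem_carrier[OF HG h] .
  have sc: "s \<in> carrier G" using core_carrier[OF phi s] .
  show "rep \<phi> h \<in> H" unfolding r using subgroup.m_closed[OF HG core_H[OF phi s] h] .
  have "ccc \<phi> h = inv\<^bsub>G\<^esub> s" unfolding ccc_def r using hc sc by (simp add: G.inv_mult_group)
  then show "ccc \<phi> h \<in> core \<phi>" using subgroup.m_inv_closed[OF core_subgroup[OF phi] s] by simp
  show "h = ccc \<phi> h \<otimes>\<^bsub>G\<^esub> rep \<phi> h" unfolding ccc_def r using hc sc by (simp add: G.m_assoc)
  have "s \<otimes>\<^bsub>G\<^esub> h \<in> core \<phi> #>\<^bsub>G\<^esub> h" using G.rcosI[OF s _ hc] core_carrier[OF phi] by blast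
  then show "core \<phi> #>\<^bsub>G\<^esub> rep \<phi> h = core \<phi> #>\<^bsub>G\<^esub> h" unfolding r
    using G.repr_independence[OF _ hc core_subgroup[OF phi]] by metis
qed

lemma cj_cancel: assumes psi: "\<psi> \<in> homs F G" and r: "r \<in> carrier G"
  shows "cj (inv\<^bsub>G\<^esub> r) (cj r \<psi>) = \<psi>"
  using cj_cj[OF psi _ r, of "inv\<^bsub>G\<^esub> r"] r cj_one[OF psi] by simp

lemma beta_inj: assumes phi: "\<phi> \<in> homs F G" shows "inj_on (\<beta> \<phi>) H"
proof
  fix h1 h2 assume h1: "h1 \<in> H" and h2: "h2 \<in> H" and eq: "\<beta> \<phi> h1 = \<beta> \<phi> h2"
  note f1 = rep_facts[OF phi h1] and f2 = rep_facts[OF phi h2]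
  have S: "subgroup (core \<phi>) G" by (rule core_subgroup[OF phi])
  have st: "rep \<phi> h1 \<otimes>\<^bsub>G\<^esub> inv\<^bsub>G\<^esub> (rep \<phi> h2) \<in> core \<phi>"
    by (rule stab[OF phi f1(1) f2(1) f1(2) f2(2) eq[unfolded \<beta>_def]])
  have r1c: "rep \<phi> h1 \<in> carrier G" using subgroup.mem_carrier[OF HG f1(1)] .
  have r2c: "rep \<phi> h2 \<in> carrier G" using subgroup.mem_carrier[OF HG f2(1)] .
  have "rep \<phi> h1 = (rep \<phi> h1 \<otimes>\<^bsub>G\<^esub> inv\<^bsub>G\<^esub> (rep \<phi> h2)) \<otimes>\<^bsub>G\<^esub> rep \<phi> h2"
    using r1c r2c by (simp add: G.m_assoc)
  then have "rep \<phi> h1 \<in> core \<phi> #>\<^bsub>G\<^esub> rep \<phi> h2"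
    using G.rcosI[OF st _ r2c] core_carrier[OF phi] by (metis subsetI)
  then have "core \<phi> #>\<^bsub>G\<^esub> rep \<phi> h2 = core \<phi> #>\<^bsub>G\<^esub> rep \<phi> h1"
    by (rule G.repr_independence[OF _ r2c S])
  then have cos: "core \<phi> #>\<^bsub>G\<^esub> h1 = core \<phi> #>\<^bsub>G\<^esub> h2" using f1(4) f2(4) by simp
  have req: "rep \<phi> h1 = rep \<phi> h2" unfolding rep_def cos ..
  have m1: "M \<phi> (ccc \<phi> h1) \<in> homs F G" by (rule M_props(1)[OF phi core_Cz[OF phi f1(2)]])
  have m2: "M \<phi> (ccc \<phi> h2) \<in> homs F G" by (rule M_props(1)[OF phi core_Cz[OF phi f2(2)]])
  have "M \<phi> (ccc \<phi> h1) = M \<phi> (ccc \<phi> h2)"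
    using cj_cancel[OF m1 r1c] cj_cancel[OF m2 r1c] eq req unfolding \<beta>_def by metis
  then have "M \<phi> (ccc \<phi> h1) t = M \<phi> (ccc \<phi> h2) t" by simp
  then have "\<phi> t \<otimes>\<^bsub>G\<^esub> ccc \<phi> h1 = \<phi> t \<otimes>\<^bsub>G\<^esub> ccc \<phi> h2"
    using M_props(3)[OF phi core_Cz[OF phi f1(2)]] M_props(3)[OF phi core_Cz[OF phi f2(2)]] by simp
  then have "ccc \<phi> h1 = ccc \<phi> h2"
    using core_carrier[OF phi f1(2)] core_carrier[OF phi f2(2)] t homs_gh[OF phi]
    by (simp add: group_hom.hom_closed)
  then show "h1 = h2" using f1(3) f2(3) req by metis
qed

lemma beta_img: assumes phi: "\<phi> \<in> homs F G" shows "\<beta> \<phi> ` H = Collect (E \<phi>)"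
proof
  show "\<beta> \<phi> ` H \<subseteq> Collect (E \<phi>)"
    using rep_facts[OF phi] unfolding \<beta>_def E_def by blast
  show "Collect (E \<phi>) \<subseteq> \<beta> \<phi> ` H"
  proof
    interpret A: group_hom F G \<phi> by (rule homs_gh[OF phi])
    fix \<psi> assume "\<psi> \<in> Collect (E \<phi>)"
    then obtain h c where h: "h \<in> H" and c: "c \<in> core \<phi>" and psi: "\<psi> = cj h (M \<phi> c)" using E_def by blast
    note fh = rep_facts[OF phi h]
    define r where "r = rep \<phi> h"
    define d where "d = ccc \<phi> h"
    have S: "subgroup (core \<phi>) G" by (rule core_subgroup[OF phi])
    have rH: "r \<in> H" and dS: "d \<in> core \<phi>" and hdr: "h = d \<otimes>\<^bsub>G\<^esub> r" using fh r_def d_def by auto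
    have rc: "r \<in> carrier G" using subgroup.mem_carrier[OF HG rH] .
    have dc: "d \<in> carrier G" using core_carrier[OF phi dS] .
    have cc: "c \<in> carrier G" using core_carrier[OF phi c] .
    have pt: "\<phi> t \<in> carrier G" using t by simp
    have mc: "M \<phi> c \<in> homs F G" by (rule M_props(1)[OF phi core_Cz[OF phi c]])
    define e where "e = inv\<^bsub>G\<^esub> (\<phi> t) \<otimes>\<^bsub>G\<^esub> inv\<^bsub>G\<^esub> d \<otimes>\<^bsub>G\<^esub> \<phi> t \<otimes>\<^bsub>G\<^esub> d"
    have idS: "inv\<^bsub>G\<^esub> d \<in> core \<phi>" using subgroup.m_inv_closed[OF S dS] .
    have eS: "e \<in> core \<phi>" unfolding e_def
      using subgroup.m_closed[OF S core_normal'[OF phi idS t(1)] dS] .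
    have dcj: "cj d \<phi> = M \<phi> e"
    proof (rule M_char[OF phi core_Cz[OF phi eS] cj_homs[OF phi dc]])
      fix k assume k: "k \<in> K"
      have eq: "d \<otimes>\<^bsub>G\<^esub> \<phi> k = \<phi> k \<otimes>\<^bsub>G\<^esub> d" using dS k core_iff[OF phi] by blast
      show "cj d \<phi> k = \<phi> k" using K_carrier[OF k] dc unfolding cj_def by (simp add: G.m_assoc eq[symmetric])
    next
      show "cj d \<phi> t = \<phi> t \<otimes>\<^bsub>G\<^esub> e" unfolding cj_def e_def using t pt dc by (simp add: G.m_assoc)
    qed
    define c' where "c' = e \<otimes>\<^bsub>G\<^esub> (inv\<^bsub>G\<^esub> d \<otimes>\<^bsub>G\<^esub> c \<otimes>\<^bsub>G\<^esub> d)"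
    have dcd: "inv\<^bsub>G\<^esub> d \<otimes>\<^bsub>G\<^esub> c \<otimes>\<^bsub>G\<^esub> d \<in> core \<phi>"
      using subgroup.m_closed[OF S subgroup.m_closed[OF S idS c] dS] .
    have c'S: "c' \<in> core \<phi>" unfolding c'_def using subgroup.m_closed[OF S eS dcd] .
    have "cj d (M \<phi> c) = M (cj d \<phi>) (inv\<^bsub>G\<^esub> d \<otimes>\<^bsub>G\<^esub> c \<otimes>\<^bsub>G\<^esub> d)"
      by (rule cj_M[OF phi dc core_Cz[OF phi c]])
    also have "\<dots> = M \<phi> c'" unfolding dcj c'_def
      by (rule M_M[OF phi core_Cz[OF phi eS] core_Cz[OF phi dcd]])
    finally have e1: "cj d (M \<phi> c) = M \<phi> c'" .
    have "\<psi> = cj r (cj d (M \<phi> c))" unfolding psi hdr by (rule cj_cj[OF mc rc dc, symmetric])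
    then have psi2: "\<psi> = cj r (M \<phi> c')" using e1 by simp
    define h' where "h' = c' \<otimes>\<^bsub>G\<^esub> r"
    have c'c: "c' \<in> carrier G" using core_carrier[OF phi c'S] .
    have h'H: "h' \<in> H" unfolding h'_def using subgroup.m_closed[OF HG core_H[OF phi c'S] rH] .
    have "h' \<in> core \<phi> #>\<^bsub>G\<^esub> r" unfolding h'_def using G.rcosI[OF c'S _ rc] core_carrier[OF phi] by (metis subsetI)
    then have "core \<phi> #>\<^bsub>G\<^esub> r = core \<phi> #>\<^bsub>G\<^esub> h'" by (rule G.repr_independence[OF _ rc S])
    then have "core \<phi> #>\<^bsub>G\<^esub> h' = core \<phi> #>\<^bsub>G\<^esub> h" using fh(4) r_def by simp
    then have rh': "rep \<phi> h' = r" unfolding r_def rep_def by simp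
    have ch': "ccc \<phi> h' = c'" unfolding ccc_def rh' unfolding h'_def using c'c rc by (simp add: G.m_assoc)
    have "\<beta> \<phi> h' = \<psi>" unfolding \<beta>_def rh' ch' psi2 ..
    then show "\<psi> \<in> \<beta> \<phi> ` H" using h'H by blast
  qed
qed


lemma E_cls: assumes phi: "\<phi> \<in> homs F G" and e: "E \<phi> \<psi>" shows "E \<psi> = E \<phi>"
proof
  fix \<chi>
  have psi: "\<psi> \<in> homs F G" by (rule E_homs[OF phi e])
  show "E \<psi> \<chi> = E \<phi> \<chi>"
    using E_trans[OF phi e, of \<chi>] E_trans[OF psi E_sym[OF phi e], of \<chi>] by blast
qed

lemma main_ctx:
  fixes \<Phi> :: "('f \<Rightarrow> 'g) set"
  assumes sub: "\<Phi> \<subseteq> homs F G" and clos: "\<And>\<phi> \<psi>. \<phi> \<in> \<Phi> \<Longrightarrow> E \<phi> \<psi> \<Longrightarrow> \<psi> \<in> \<Phi>"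
  shows "card_dvd H \<Phi>"
proof -
  define rp where "rp \<phi> = (SOME \<psi>. E \<phi> \<psi>)" for \<phi>
  have rpE: "E \<phi> (rp \<phi>)" if "\<phi> \<in> homs F G" for \<phi>
    unfolding rp_def by (rule someI[where P="E \<phi>", OF E_refl[OF that]])
  define C where "C = rp ` \<Phi>"
  define g where "g = (\<lambda>(h, r). \<beta> r h)"
  have rhoms: "r \<in> homs F G" if "r \<in> C" for r
    using that sub rpE E_homs unfolding C_def by blast
  have "bij_betw g (H \<times> C) \<Phi>"
    unfolding bij_betw_def
  proof
    show "inj_on g (H \<times> C)"
    proof (rule inj_onI, clarify)
      fix h1 r1 h2 r2 assume h1: "h1 \<in> H" and r1: "r1 \<in> C" and h2: "h2 \<in> H" and r2: "r2 \<in> C"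
        and eq: "g (h1, r1) = g (h2, r2)"
      obtain \<phi>1 where p1: "\<phi>1 \<in> \<Phi>" "r1 = rp \<phi>1" using r1 C_def by blast
      obtain \<phi>2 where p2: "\<phi>2 \<in> \<Phi>" "r2 = rp \<phi>2" using r2 C_def by blast
      have ph1: "\<phi>1 \<in> homs F G" and ph2: "\<phi>2 \<in> homs F G" using p1 p2 sub by auto
      have rh1: "r1 \<in> homs F G" and rh2: "r2 \<in> homs F G" using rhoms r1 r2 by auto
      define x where "x = \<beta> r1 h1"
      have x2: "x = \<beta> r2 h2" using eq unfolding x_def g_def by simp
      have ex1: "E r1 x" using beta_img[OF rh1] h1 unfolding x_def by blast
      have ex2: "E r2 x" using beta_img[OF rh2] h2 unfolding x2 by blast
      have "E \<phi>1 = E r1" using E_cls[OF ph1 rpE[OF ph1]] p1 by simp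
      also have "E r1 = E x" using E_cls[OF rh1 ex1] by simp
      also have "E x = E r2" using E_cls[OF rh2 ex2] by simp
      also have "E r2 = E \<phi>2" using E_cls[OF ph2 rpE[OF ph2]] p2 by simp
      finally have "E \<phi>1 = E \<phi>2" .
      then have req: "r1 = r2" using p1 p2 unfolding rp_def by simp
      then have "\<beta> r1 h1 = \<beta> r1 h2" using x_def x2 by simp
      then show "h1 = h2 \<and> r1 = r2" using beta_inj[OF rh1] h1 h2 req by (simp add: inj_on_def)
    qed
  next
    show "g ` (H \<times> C) = \<Phi>"
    proof
      show "g ` (H \<times> C) \<subseteq> \<Phi>"
      proof clarify
        fix h r assume h: "h \<in> H" and r: "r \<in> C"
        obtain \<phi> where p: "\<phi> \<in> \<Phi>" "r = rp \<phi>" using r C_def by blast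
        have ph: "\<phi> \<in> homs F G" using p sub by auto
        have rh: "r \<in> homs F G" using rhoms r by auto
        have "E r (\<beta> r h)" using beta_img[OF rh] h by blast
        then have "E \<phi> (\<beta> r h)" using E_trans[OF ph] rpE[OF ph] p by blast
        then show "g (h, r) \<in> \<Phi>" using clos[OF p(1)] unfolding g_def by simp
      qed
      show "\<Phi> \<subseteq> g ` (H \<times> C)"
      proof
        fix \<psi> assume psi: "\<psi> \<in> \<Phi>"
        have ph: "\<psi> \<in> homs F G" using psi sub by auto
        define r where "r = rp \<psi>"
        have rC: "r \<in> C" using psi r_def C_def by blast
        have rh: "r \<in> homs F G" using rhoms rC by auto
        have "E r \<psi>" using E_sym[OF ph rpE[OF ph]] r_def by simp
        then obtain h where h: "h \<in> H" "\<psi> = \<beta> r h" using beta_img[OF rh] by blast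
        then show "\<psi> \<in> g ` (H \<times> C)" unfolding g_def using rC by force
      qed
    qed
  qed
  then have "H \<times> C \<approx> \<Phi>" unfolding eqpoll_def by blast
  then show ?thesis unfolding card_dvd_def using eqpoll_sym by blast
qed

end

theorem mainTheorem1:
  fixes F :: "('f,'m) monoid_scheme" and deg :: "'f \<Rightarrow> int"
    and G :: "('g,'n) monoid_scheme" and H :: "'g set" and \<Phi> :: "('f \<Rightarrow> 'g) set"
  assumes "indexed_group F deg"
    and "group G"
    and "subgroup H G"
    and "\<Phi> \<subseteq> homs F G"
    and I: "\<And>h \<phi>. h \<in> H \<Longrightarrow> \<phi> \<in> \<Phi> \<Longrightarrow>
              (\<lambda>f\<in>carrier F. inv\<^bsub>G\<^esub> h \<otimes>\<^bsub>G\<^esub> \<phi> f \<otimes>\<^bsub>G\<^esub> h) \<in> \<Phi>"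
    and II: "\<And>\<phi> h \<psi>. \<phi> \<in> \<Phi> \<Longrightarrow> h \<in> phi_core F deg G \<phi> H \<Longrightarrow> \<psi> \<in> homs F G \<Longrightarrow>
              (\<forall>f\<in>carrier F. deg f = 0 \<longrightarrow> \<psi> f = \<phi> f) \<Longrightarrow>
              (\<exists>f1\<in>carrier F. deg f1 = 1 \<and> \<psi> f1 = \<phi> f1 \<otimes>\<^bsub>G\<^esub> h) \<Longrightarrow> \<psi> \<in> \<Phi>"
  shows "card_dvd H \<Phi>"
proof -
  have gF: "group F" and degm: "\<And>x y. x \<in> carrier F \<Longrightarrow> y \<in> carrier F \<Longrightarrow> deg (x \<otimes>\<^bsub>F\<^esub> y) = deg x + deg y"
    and surj: "deg ` carrier F = UNIV" using assms(1) unfolding indexed_group_def by auto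
  obtain t where t: "t \<in> carrier F" "deg t = 1" using surj by (metis UNIV_I imageE)
  interpret C: ctx F G deg H t
    unfolding ctx_def ctx_axioms_def using gF assms(2,3) degm t by blast
  show ?thesis
  proof (rule C.main_ctx[OF assms(4)])
    fix \<phi> \<psi> assume phi: "\<phi> \<in> \<Phi>" and e: "C.E \<phi> \<psi>"
    obtain h c where h: "h \<in> H" and c: "c \<in> C.core \<phi>" and psi: "\<psi> = C.cj h (C.M \<phi> c)"
      using e C.E_def by blast
    have ph: "\<phi> \<in> homs F G" using phi assms(4) by auto
    have cz: "C.Cz \<phi> c" by (rule C.core_Cz[OF ph c])
    have "C.M \<phi> c \<in> \<Phi>"
    proof (rule II[OF phi c[unfolded C.core_def] C.M_props(1)[OF ph cz]])
      show "\<forall>f\<in>carrier F. deg f = 0 \<longrightarrow> C.M \<phi> c f = \<phi> f"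
        using C.M_props(2)[OF ph cz] unfolding C.K_def by blast
      show "\<exists>f1\<in>carrier F. deg f1 = 1 \<and> C.M \<phi> c f1 = \<phi> f1 \<otimes>\<^bsub>G\<^esub> c"
        using C.M_props(3)[OF ph cz] t by blast
    qed
    then show "\<psi> \<in> \<Phi>" unfolding psi C.cj_def using I[OF h] by blast
  qed
qed

end
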